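(* Let $\lambda_0<\lambda_1$ be real numbers, let $\lambda_2,\dots,\lambda_n\in\mathbb{C}$, and suppose that $E_{(\lambda_2,\dots,\lambda_n)}$ is an extended Chebyshev space over $[a,b]$ ($a<b$) that is closed under complex conjugation. Let $p_{n,0},\dots,p_{n,n}$ be a Bernstein basis of $E_{(\lambda_0,\dots,\lambda_n)}$ for $\{a,b\}$ consisting of real-valued functions that are non-negative on $[a,b]$. Then there exist unique points $t_0,\dots,t_n\in[a,b]$ and unique positive coefficients $\alpha_0,\dots,\alpha_n$ such that the operator $B_n:C[a,b]\to E_{(\lambda_0,\dots,\lambda_n)}$, $B_nf=\sum_{k=0}^nf(t_k)\alpha_kp_{n,k}$, satisfies $B_n(e^{\lambda_0x})=e^{\lambda_0x}$ and $B_n(e^{\lambda_1x})=e^{\lambda_1x}$.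
   Context: For complex numbers $\mu_0,\dots,\mu_m$, the space of exponential polynomials is $E_{(\mu_0,\dots,\mu_m)}=\{f\in C^\infty(\mathbb{R},\mathbb{C}):(\frac{d}{dx}-\mu_0)\cdots(\frac{d}{dx}-\mu_m)f=0\}$ (of dimension $m+1$), considered as functions on $[a,b]$. It is closed under complex conjugation if $\bar f$ belongs to it whenever $f$ does. An $(m+1)$-dimensional space $V\subset C^m([a,b],\mathbb{C})$ is an extended Chebyshev space over $[a,b]$ if every non-zero $f\in V$ has at most $m$ zeros in $[a,b]$ counting multiplicities. A function has a zero of order $k$ at $c$ if $f(c)=\dots=f^{(k-1)}(c)=0\neq f^{(k)}(c)$ (one-sided at endpoints); a Bernstein basis for $\{a,b\}$ of an $(m+1)$-dimensional space is a system $p_{m,0},\dots,p_{m,m}$ in it with $p_{m,k}$ having a zero of order exactly $k$ at $a$ and exactly $m-k$ at $b$. *)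

theory Defs
  imports "HOL-Analysis.Analysis"
begin

definition cderiv :: "(real \<Rightarrow> complex) \<Rightarrow> real \<Rightarrow> complex" where
  "cderiv f = (\<lambda>x. vector_derivative f (at x))"

definition smooth_fun :: "(real \<Rightarrow> complex) \<Rightarrow> bool" where
  "smooth_fun f \<longleftrightarrow> (\<forall>k x. ((cderiv ^^ k) f) differentiable (at x))"

definition diff_op :: "complex \<Rightarrow> (real \<Rightarrow> complex) \<Rightarrow> real \<Rightarrow> complex" where
  "diff_op \<mu> f = (\<lambda>x. cderiv f x - \<mu> * f x)"

text \<open>Space of exponential polynomials E_(mu_0,...,mu_m), the list being [mu_0,...,mu_m]:
  smooth f with (d/dx - mu_0) ... (d/dx - mu_m) f = 0.\<close>
definition exp_poly_space :: "complex list \<Rightarrow> (real \<Rightarrow> complex) set" where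
  "exp_poly_space mus =
     {f. smooth_fun f \<and> foldr diff_op mus f = (\<lambda>_. 0)}"

definition closed_under_cnj :: "(real \<Rightarrow> complex) set \<Rightarrow> bool" where
  "closed_under_cnj V \<longleftrightarrow> (\<forall>f\<in>V. (\<lambda>x. cnj (f x)) \<in> V)"

definition zero_at_least :: "(real \<Rightarrow> complex) \<Rightarrow> real \<Rightarrow> nat \<Rightarrow> bool" where
  "zero_at_least f c k \<longleftrightarrow> (\<forall>j<k. (cderiv ^^ j) f c = 0)"

definition zero_order_exactly :: "(real \<Rightarrow> complex) \<Rightarrow> real \<Rightarrow> nat \<Rightarrow> bool" where
  "zero_order_exactly f c k \<longleftrightarrow> zero_at_least f c k \<and> (cderiv ^^ k) f c \<noteq> 0"

text \<open>Extended Chebyshev space over [a,b] (for an (m+1)-dimensional space V):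
  every f in V that is non-zero on [a,b] has at most m zeros in [a,b],
  counting multiplicities.\<close>
definition ext_chebyshev :: "(real \<Rightarrow> complex) set \<Rightarrow> nat \<Rightarrow> real \<Rightarrow> real \<Rightarrow> bool" where
  "ext_chebyshev V m a b \<longleftrightarrow>
     (\<forall>f\<in>V. (\<exists>x\<in>{a..b}. f x \<noteq> 0) \<longrightarrow>
        (\<forall>S k. finite S \<and> S \<subseteq> {a..b} \<and> (\<forall>c\<in>S. zero_at_least f c (k c))
               \<longrightarrow> (\<Sum>c\<in>S. k c) \<le> m))"

definition bernstein_basis ::
    "(nat \<Rightarrow> real \<Rightarrow> complex) \<Rightarrow> nat \<Rightarrow> (real \<Rightarrow> complex) set \<Rightarrow> real \<Rightarrow> real \<Rightarrow> bool" where
  "bernstein_basis p m V a b \<longleftrightarrow>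
     (\<forall>k\<le>m. p k \<in> V \<and> zero_order_exactly (p k) a k \<and> zero_order_exactly (p k) b (m - k))"

definition bern_op ::
    "nat \<Rightarrow> (nat \<Rightarrow> real) \<Rightarrow> (nat \<Rightarrow> real) \<Rightarrow> (nat \<Rightarrow> real \<Rightarrow> complex)
       \<Rightarrow> (real \<Rightarrow> real) \<Rightarrow> real \<Rightarrow> complex" where
  "bern_op n t \<alpha> p f = (\<lambda>x. \<Sum>k\<le>n. of_real (f (t k) * \<alpha> k) * p k x)"

end

theory Submission
  imports Defs
begin

lemma cderiv_Suc: "(cderiv ^^ Suc j) f = (cderiv ^^ j) (cderiv f)"
  by (simp add: funpow_Suc_right del: funpow.simps)

lemma cderiv_Suc': "(cderiv ^^ j) (cderiv f) = cderiv ((cderiv ^^ j) f)"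
  by (metis funpow_swap1)

lemma smooth_cderiv: "smooth_fun f \<Longrightarrow> smooth_fun (cderiv f)"
  unfolding smooth_fun_def by (metis cderiv_Suc)

lemma smooth_funpow: "smooth_fun f \<Longrightarrow> smooth_fun ((cderiv ^^ j) f)"
  by (induction j) (auto intro: smooth_cderiv)

lemma smooth_diff: "smooth_fun f \<Longrightarrow> f differentiable (at x)"
  unfolding smooth_fun_def by (metis funpow_0)

lemma smooth_hasd: "smooth_fun f \<Longrightarrow> (f has_vector_derivative cderiv f x) (at x)"
  unfolding cderiv_def by (simp add: smooth_diff vector_derivative_works[symmetric])

lemma cderiv_eqI: "(f has_vector_derivative D) (at x) \<Longrightarrow> cderiv f x = D"
  unfolding cderiv_def by (simp add: vector_derivative_at)

lemma lc_hasd: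
  assumes "\<forall>k\<le>m. smooth_fun (f k)"
  shows "((\<lambda>x. \<Sum>k\<le>m. w k * f k x) has_vector_derivative (\<Sum>k\<le>m. w k * cderiv (f k) x)) (at x)"
  using assms by (intro has_vector_derivative_sum has_vector_derivative_mult_right) (auto intro: smooth_hasd)

lemma lc_cderiv:
  assumes "\<forall>k\<le>m. smooth_fun (f k)"
  shows "cderiv (\<lambda>x. \<Sum>k\<le>m. w k * f k x) = (\<lambda>x. \<Sum>k\<le>m. w k * cderiv (f k) x)"
  using lc_hasd[OF assms] cderiv_eqI by blast

lemma lc_jets:
  assumes "\<forall>k\<le>m. smooth_fun (f k)"
  shows "(cderiv ^^ j) (\<lambda>x. \<Sum>k\<le>m. w k * f k x) = (\<lambda>x. \<Sum>k\<le>m. w k * (cderiv ^^ j) (f k) x)"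
proof (induction j)
  case 0 then show ?case by simp
next
  case (Suc j)
  have "\<forall>k\<le>m. smooth_fun ((cderiv ^^ j) (f k))" using assms smooth_funpow by blast
  then show ?case using Suc by (simp add: lc_cderiv)
qed

lemma lc_smooth:
  assumes "\<forall>k\<le>m. smooth_fun (f k)"
  shows "smooth_fun (\<lambda>x. \<Sum>k\<le>m. w k * f k x)"
  unfolding smooth_fun_def
proof (intro allI)
  fix j x
  have h: "\<forall>k\<le>m. smooth_fun ((cderiv ^^ j) (f k))" using assms smooth_funpow by blast
  have "((\<lambda>x. \<Sum>k\<le>m. w k * (cderiv ^^ j) (f k) x) has_vector_derivative (\<Sum>k\<le>m. w k * cderiv ((cderiv ^^ j) (f k)) x)) (at x)" by (rule lc_hasd[OF h])
  then show "(cderiv ^^ j) (\<lambda>x. \<Sum>k\<le>m. w k * f k x) differentiable at x"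
    unfolding lc_jets[OF assms] by (rule differentiableI_vector)
qed

lemma diff_op_lc: "diff_op \<mu> f = (\<lambda>x. \<Sum>k\<le>(1::nat). (if k = 0 then 1 else -\<mu>) * (if k = 0 then cderiv f else f) x)"
  unfolding diff_op_def by auto

lemma diff_op_smooth_jets:
  assumes "smooth_fun f"
  shows "smooth_fun (diff_op \<mu> f)" "(cderiv ^^ j) (diff_op \<mu> f) = (\<lambda>x. (cderiv ^^ Suc j) f x - \<mu> * (cderiv ^^ j) f x)"
proof -
  have a: "\<forall>k\<le>(1::nat). smooth_fun (if k = 0 then cderiv f else f)" using assms smooth_cderiv by auto
  show "smooth_fun (diff_op \<mu> f)" unfolding diff_op_lc by (rule lc_smooth[OF a])
  show "(cderiv ^^ j) (diff_op \<mu> f) = (\<lambda>x. (cderiv ^^ Suc j) f x - \<mu> * (cderiv ^^ j) f x)"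
    unfolding diff_op_lc lc_jets[OF a] by (simp add: cderiv_Suc')
qed

lemma cderiv_diff_op:
  assumes "smooth_fun f"
  shows "cderiv (diff_op \<nu> f) = (\<lambda>x. cderiv (cderiv f) x - \<nu> * cderiv f x)"
  using diff_op_smooth_jets(2)[OF assms, where \<mu>=\<nu> and j=1] by simp

lemma diff_op_comm:
  assumes "smooth_fun f"
  shows "diff_op \<mu> (diff_op \<nu> f) = diff_op \<nu> (diff_op \<mu> f)"
  unfolding diff_op_def[of \<mu>] diff_op_def[of \<nu>] cderiv_diff_op[OF assms, unfolded diff_op_def]
  by (auto simp: diff_op_def algebra_simps fun_eq_iff)

lemma diff_op_lc_comm:
  assumes "\<forall>k\<le>m. smooth_fun (f k)"
  shows "diff_op \<mu> (\<lambda>x. \<Sum>k\<le>m. w k * f k x) = (\<lambda>x. \<Sum>k\<le>m. w k * diff_op \<mu> (f k) x)"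
  unfolding diff_op_def lc_cderiv[OF assms] by (auto simp: fun_eq_iff sum_subtractf algebra_simps sum_distrib_left)

lemma foldr_smooth: "smooth_fun f \<Longrightarrow> smooth_fun (foldr diff_op mus f)"
  by (induction mus) (auto intro: diff_op_smooth_jets)

lemma foldr_comm: "smooth_fun f \<Longrightarrow> foldr diff_op mus (diff_op \<mu> f) = diff_op \<mu> (foldr diff_op mus f)"
  by (induction mus) (auto simp: diff_op_comm foldr_smooth)

lemma foldr_lc:
  assumes "\<forall>k\<le>m. smooth_fun (f k)"
  shows "foldr diff_op mus (\<lambda>x. \<Sum>k\<le>m. w k * f k x) = (\<lambda>x. \<Sum>k\<le>m. w k * foldr diff_op mus (f k) x)"
proof (induction mus)
  case Nil then show ?case by simp
next
  case (Cons \<nu> mus)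
  have "\<forall>k\<le>m. smooth_fun (foldr diff_op mus (f k))" using assms foldr_smooth by blast
  then show ?case using Cons by (simp add: diff_op_lc_comm)
qed

lemma space_lc:
  assumes "\<forall>k\<le>m. f k \<in> exp_poly_space mus"
  shows "(\<lambda>x. \<Sum>k\<le>m. w k * f k x) \<in> exp_poly_space mus"
proof -
  have s: "\<forall>k\<le>m. smooth_fun (f k)" using assms by (auto simp: exp_poly_space_def)
  show ?thesis using assms unfolding exp_poly_space_def
    by (auto simp: lc_smooth[OF s] foldr_lc[OF s])
qed

lemma space_diff_op:
  assumes "f \<in> exp_poly_space (\<mu> # mus)"
  shows "diff_op \<mu> f \<in> exp_poly_space mus"
  using assms unfolding exp_poly_space_def by (auto simp: foldr_comm diff_op_smooth_jets)

definition expf :: "complex \<Rightarrow> real \<Rightarrow> complex" where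
  "expf \<mu> x = exp (\<mu> * of_real x)"

lemma expf_hasd: "((\<lambda>x. c * expf \<mu> x) has_vector_derivative (c * (\<mu> * expf \<mu> x))) (at x within S)"
proof -
  have "((\<lambda>z. exp (\<mu> * z)) has_field_derivative (exp (\<mu> * of_real x) * \<mu>)) (at (of_real x))"
    by (auto intro!: derivative_eq_intros)
  then have "((\<lambda>x. exp (\<mu> * of_real x)) has_vector_derivative (exp (\<mu> * of_real x) * \<mu>)) (at x within S)"
    by (rule has_vector_derivative_real_field)
  then have "((\<lambda>x. c * exp (\<mu> * of_real x)) has_vector_derivative c * (exp (\<mu> * of_real x) * \<mu>)) (at x within S)"
    by (rule has_vector_derivative_mult_right)
  then show ?thesis unfolding expf_def by (simp add: mult.commute)
qed

lemma expf_cderiv: "cderiv (\<lambda>x. c * expf \<mu> x) = (\<lambda>x. (c * \<mu>) * expf \<mu> x)"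
  using expf_hasd[of c \<mu> _ UNIV] cderiv_eqI by (auto simp: fun_eq_iff ac_simps)

lemma expf_jets: "(cderiv ^^ j) (\<lambda>x. c * expf \<mu> x) = (\<lambda>x. (c * \<mu> ^ j) * expf \<mu> x)"
proof (induction j arbitrary: c)
  case 0 then show ?case by simp
next
  case (Suc j)
  show ?case unfolding cderiv_Suc expf_cderiv Suc by (simp add: mult.assoc)
qed

lemma expf_smooth: "smooth_fun (\<lambda>x. c * expf \<mu> x)"
  unfolding smooth_fun_def expf_jets using expf_hasd differentiableI_vector by blast

lemma expf_diff_op: "diff_op \<nu> (\<lambda>x. c * expf \<mu> x) = (\<lambda>x. (c * (\<mu> - \<nu>)) * expf \<mu> x)"
  unfolding diff_op_def expf_cderiv by (auto simp: algebra_simps)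

lemma expf_foldr: "foldr diff_op mus (\<lambda>x. c * expf \<mu> x) = (\<lambda>x. (c * prod_list (map (\<lambda>\<nu>. \<mu> - \<nu>) mus)) * expf \<mu> x)"
proof (induction mus arbitrary: c)
  case Nil then show ?case by simp
next
  case (Cons \<nu> mus)
  show ?case by (simp only: foldr.simps o_apply Cons expf_diff_op) (simp add: mult.assoc mult.left_commute)
qed

lemma expf_space: "\<mu> \<in> set mus \<Longrightarrow> (\<lambda>x. c * expf \<mu> x) \<in> exp_poly_space mus"
  unfolding exp_poly_space_def using expf_smooth expf_foldr[of mus c \<mu>]
  by (auto simp: prod_list_zero_iff)

lemma ode_interval:
  assumes "smooth_fun f" "a \<le> b" "\<forall>x\<in>{a..b}. diff_op \<mu> f x = 0"
  shows "\<forall>x\<in>{a..b}. f x = exp (\<mu> * of_real (x - a)) * f a"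
proof -
  define h where "h x = exp (- (\<mu> * of_real x)) * f x" for x
  have "(h has_vector_derivative 0) (at x within {a..b})" if "x \<in> {a..b}" for x
  proof -
    have "(h has_vector_derivative (exp (- (\<mu> * of_real x)) * cderiv f x + (-\<mu> * exp (- (\<mu> * of_real x))) * f x)) (at x within {a..b})"
      unfolding h_def
      apply (rule has_vector_derivative_mult)
      using expf_hasd[of 1 "-\<mu>" x "{a..b}"] apply (simp add: expf_def)
      using smooth_hasd[OF assms(1)] has_vector_derivative_at_within by blast
    moreover have "cderiv f x - \<mu> * f x = 0" using assms(3) that by (simp add: diff_op_def)
    ultimately show ?thesis by (simp add: algebra_simps)
  qed
  then obtain c where c: "\<And>x. x \<in> {a..b} \<Longrightarrow> h x = c"
    using has_vector_derivative_zero_constant[of "{a..b}" h] by blast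
  show ?thesis
  proof
    fix x assume x: "x \<in> {a..b}"
    have "h x = h a" using c x assms(2) by auto
    then show "f x = exp (\<mu> * of_real (x - a)) * f a"
      unfolding h_def by (simp add: exp_minus field_simps exp_diff)
  qed
qed

lemma zero_jet_unique:
  assumes "f \<in> exp_poly_space mus" "\<forall>j<length mus. (cderiv ^^ j) f a = 0"
  shows "f x = 0"
  using assms
proof (induction mus arbitrary: f x)
  case Nil
  then have "f = (\<lambda>_. 0)" unfolding exp_poly_space_def by simp
  then show ?case by simp
next
  case (Cons \<mu> rest)
  have sf: "smooth_fun f" using Cons.prems by (simp add: exp_poly_space_def)
  have g: "diff_op \<mu> f \<in> exp_poly_space rest" using Cons.prems space_diff_op by blast
  have "(cderiv ^^ j) (diff_op \<mu> f) a = 0" if j: "j < length rest" for j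
  proof -
    have "(cderiv ^^ Suc j) f a = 0" "(cderiv ^^ j) f a = 0" using Cons.prems(2) j by auto
    then show ?thesis unfolding diff_op_smooth_jets(2)[OF sf] by simp
  qed
  then have g0: "\<And>y. diff_op \<mu> f y = 0" using Cons.IH[OF g] by blast
  have fa: "f a = 0" using Cons.prems(2)[rule_format, of 0] by simp
  show ?case
  proof (cases "a \<le> x")
    case True
    have "\<forall>y\<in>{a..x}. f y = exp (\<mu> * of_real (y - a)) * f a" by (rule ode_interval[OF sf True]) (simp add: g0)
    then have "f x = exp (\<mu> * of_real (x - a)) * f a" by (rule bspec) (use True in auto)
    then show ?thesis using fa by simp
  next
    case False
    then have xa: "x \<le> a" by simp
    have "\<forall>y\<in>{x..a}. f y = exp (\<mu> * of_real (y - x)) * f x" by (rule ode_interval[OF sf xa]) (simp add: g0)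
    then have "f a = exp (\<mu> * of_real (a - x)) * f x" by (rule bspec) (use xa in auto)
    then show ?thesis using fa by simp
  qed
qed

lemma sum_upd:
  fixes w g :: "nat \<Rightarrow> complex"
  assumes "finite K" "m \<in> K"
  shows "(\<Sum>k\<in>K. (w(m:=v)) k * g k) = (\<Sum>k\<in>K. w k * g k) + (v - w m) * g m"
proof -
  have "(\<Sum>k\<in>K. (w(m:=v)) k * g k) = (w(m:=v)) m * g m + (\<Sum>k\<in>K-{m}. (w(m:=v)) k * g k)"
    using assms by (rule sum.remove)
  also have "(\<Sum>k\<in>K-{m}. (w(m:=v)) k * g k) = (\<Sum>k\<in>K-{m}. w k * g k)"
    by (rule sum.cong) auto
  finally have e1: "(\<Sum>k\<in>K. (w(m:=v)) k * g k) = v * g m + (\<Sum>k\<in>K-{m}. w k * g k)" by simp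
  have e2: "(\<Sum>k\<in>K. w k * g k) = w m * g m + (\<Sum>k\<in>K-{m}. w k * g k)"
    using assms by (rule sum.remove)
  show ?thesis unfolding e1 e2 by (simp add: left_diff_distrib)
qed

lemma span_lemma:
  fixes p :: "nat \<Rightarrow> real \<Rightarrow> complex"
  assumes f: "f \<in> exp_poly_space mus" and len: "length mus = Suc n"
    and p: "\<forall>k\<le>n. p k \<in> exp_poly_space mus"
    and za: "\<forall>k\<le>n. zero_at_least (p k) a k" and nz: "\<forall>k\<le>n. (cderiv ^^ k) (p k) a \<noteq> 0"
  shows "\<exists>w. \<forall>x. f x = (\<Sum>k\<le>n. w k * p k x)"
proof -
  define A where "A j k = (cderiv ^^ j) (p k) a" for j k
  have claim: "\<exists>w. (\<forall>k. m \<le> k \<longrightarrow> w k = 0) \<and> (\<forall>j<m. (cderiv ^^ j) f a = (\<Sum>k\<le>n. w k * A j k))"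
    if "m \<le> Suc n" for m
    using that
  proof (induction m)
    case 0 then show ?case by (intro exI[of _ "\<lambda>_. 0"]) simp
  next
    case (Suc m)
    then obtain w where w0: "\<forall>k. m \<le> k \<longrightarrow> w k = 0"
      and wj: "\<forall>j<m. (cderiv ^^ j) f a = (\<Sum>k\<le>n. w k * A j k)" by auto
    have mn: "m \<le> n" using Suc.prems by simp
    define v where "v = ((cderiv ^^ m) f a - (\<Sum>k\<le>n. w k * A m k)) / A m m"
    have Amm: "A m m \<noteq> 0" using nz mn by (simp add: A_def)
    have upd: "(\<Sum>k\<le>n. (w(m:=v)) k * A j k) = (\<Sum>k\<le>n. w k * A j k) + v * A j m" for j
      using sum_upd[of "{..n}" m w v "A j"] mn w0 by (simp del: fun_upd_apply)
    show ?case
    proof (intro exI[of _ "w(m:=v)"] conjI allI impI)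
      fix k assume "Suc m \<le> k" then show "(w(m:=v)) k = 0" using w0 by auto
    next
      fix j assume j: "j < Suc m"
      show "(cderiv ^^ j) f a = (\<Sum>k\<le>n. (w(m:=v)) k * A j k)"
      proof (cases "j < m")
        case True
        then have "A j m = 0" using za mn by (simp add: A_def zero_at_least_def)
        then show ?thesis using upd wj True by simp
      next
        case False
        then have "j = m" using j by simp
        then show ?thesis using upd Amm by (simp add: v_def)
      qed
    qed
  qed
  obtain w where w: "\<forall>j<Suc n. (cderiv ^^ j) f a = (\<Sum>k\<le>n. w k * A j k)" using claim[of "Suc n"] by auto
  define g where "g k = (if k \<le> n then p k else f)" for k
  define w' where "w' k = (if k \<le> n then - w k else 1)" for k
  have gs: "\<forall>k\<le>Suc n. g k \<in> exp_poly_space mus" using p f by (simp add: g_def)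
  then have gsm: "\<forall>k\<le>Suc n. smooth_fun (g k)" by (simp add: exp_poly_space_def)
  have R: "(\<lambda>x. \<Sum>k\<le>Suc n. w' k * g k x) \<in> exp_poly_space mus" by (rule space_lc[OF gs])
  have Rx: "(\<Sum>k\<le>Suc n. w' k * g k x) = f x - (\<Sum>k\<le>n. w k * p k x)" for x
  proof -
    have "(\<Sum>k\<le>n. w' k * g k x) = (\<Sum>k\<le>n. - (w k * p k x))"
      by (rule sum.cong) (auto simp: g_def w'_def)
    then show ?thesis by (simp add: sum_negf w'_def g_def)
  qed
  have "\<forall>j<length mus. (cderiv ^^ j) (\<lambda>x. \<Sum>k\<le>Suc n. w' k * g k x) a = 0"
  proof (intro allI impI)
    fix j assume "j < length mus"
    then have "(cderiv ^^ j) f a = (\<Sum>k\<le>n. w k * A j k)" using w len by simp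
    moreover have "(\<Sum>k\<le>n. w' k * (cderiv ^^ j) (g k) a) = (\<Sum>k\<le>n. - (w k * A j k))"
      by (rule sum.cong) (auto simp: g_def w'_def A_def)
    ultimately show "(cderiv ^^ j) (\<lambda>x. \<Sum>k\<le>Suc n. w' k * g k x) a = 0"
      unfolding lc_jets[OF gsm] by (simp add: sum_negf w'_def g_def)
  qed
  then have "\<And>x. (\<Sum>k\<le>Suc n. w' k * g k x) = 0" by (rule zero_jet_unique[OF R])
  then have "\<And>x. f x - (\<Sum>k\<le>n. w k * p k x) = 0" unfolding Rx .
  then have "\<And>x. f x = (\<Sum>k\<le>n. w k * p k x)" by (simp add: right_minus_eq)
  then show ?thesis by blast
qed


lemma deriv_agree:
  assumes ab: "a < b" and x: "x \<in> {a..b}" and f: "f differentiable (at x)" and g: "g differentiable (at x)"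
    and eq: "\<forall>y\<in>{a..b}. f y = g y"
  shows "cderiv f x = cderiv g x"
proof -
  have f': "(f has_vector_derivative cderiv f x) (at x within {a..b})"
    using f unfolding cderiv_def by (metis has_vector_derivative_at_within vector_derivative_works)
  have g': "(g has_vector_derivative cderiv g x) (at x within {a..b})"
    using g unfolding cderiv_def by (metis has_vector_derivative_at_within vector_derivative_works)
  have "(f has_vector_derivative cderiv g x) (at x within {a..b})"
    by (rule has_vector_derivative_transform[OF x _ g']) (use eq in auto)
  then show ?thesis using vector_derivative_unique_within_closed_interval[of a b x f] f' ab x
    by (simp add: cbox_interval)
qed

lemma jets_agree:
  assumes "a < b" "smooth_fun f" "smooth_fun g" "\<forall>y\<in>{a..b}. f y = g y"
  shows "\<forall>y\<in>{a..b}. (cderiv ^^ j) f y = (cderiv ^^ j) g y"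
proof (induction j)
  case 0 then show ?case using assms by simp
next
  case (Suc j)
  show ?case
  proof
    fix y assume y: "y \<in> {a..b}"
    have "cderiv ((cderiv ^^ j) f) y = cderiv ((cderiv ^^ j) g) y"
      by (rule deriv_agree[OF assms(1) y smooth_diff[OF smooth_funpow[OF assms(2)]] smooth_diff[OF smooth_funpow[OF assms(3)]] Suc])
    then show "(cderiv ^^ Suc j) f y = (cderiv ^^ Suc j) g y" by simp
  qed
qed

lemma real_deriv:
  assumes ab: "a < b" and x: "x \<in> {a..b}" and f: "f differentiable (at x)"
    and re: "\<forall>y\<in>{a..b}. f y \<in> \<real>"
  shows "cderiv f x \<in> \<real>"
proof -
  have f': "(f has_vector_derivative cderiv f x) (at x within {a..b})"
    using f unfolding cderiv_def by (metis has_vector_derivative_at_within vector_derivative_works)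
  then have "((\<lambda>y. Im (f y)) has_field_derivative Im (cderiv f x)) (at x within {a..b})"
    by (rule has_field_derivative_Im)
  then have "((\<lambda>y. Im (f y)) has_vector_derivative Im (cderiv f x)) (at x within {a..b})"
    by (simp add: has_real_derivative_iff_has_vector_derivative)
  moreover have "((\<lambda>y. Im (f y)) has_vector_derivative 0) (at x within {a..b})"
    by (rule has_vector_derivative_transform[OF x _ has_vector_derivative_const]) (use re in \<open>auto simp: complex_is_Real_iff\<close>)
  ultimately have "Im (cderiv f x) = 0"
    using vector_derivative_unique_within_closed_interval[of a b x] ab x by (simp add: cbox_interval)
  then show ?thesis by (simp add: complex_is_Real_iff)
qed

lemma real_jets:
  assumes "a < b" "smooth_fun f" "\<forall>y\<in>{a..b}. f y \<in> \<real>"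
  shows "\<forall>y\<in>{a..b}. (cderiv ^^ j) f y \<in> \<real>"
proof (induction j)
  case 0 then show ?case using assms by simp
next
  case (Suc j)
  have "\<forall>y\<in>{a..b}. cderiv ((cderiv ^^ j) f) y \<in> \<real>"
    using real_deriv[OF assms(1) _ smooth_diff[OF smooth_funpow[OF assms(2)]] Suc] by blast
  then show ?case by simp
qed


lemma zal_Suc:
  "zero_at_least f c (Suc m) \<longleftrightarrow> f c = 0 \<and> zero_at_least (cderiv f) c m"
  unfolding zero_at_least_def
proof safe
  fix j assume "\<forall>j<Suc m. (cderiv ^^ j) f c = 0" "j < m"
  then show "(cderiv ^^ j) (cderiv f) c = 0" by (metis cderiv_Suc Suc_mono)
next
  assume "\<forall>j<Suc m. (cderiv ^^ j) f c = 0" then show "f c = 0" by (metis funpow_0 zero_less_Suc)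
next
  fix j assume "f c = 0" "\<forall>j<m. (cderiv ^^ j) (cderiv f) c = 0" "j < Suc m"
  then show "(cderiv ^^ j) f c = 0" by (cases j) (auto simp: cderiv_Suc')
qed

lemma Re_hasd: "smooth_fun f \<Longrightarrow> ((\<lambda>t. Re (f t)) has_real_derivative Re (cderiv f x)) (at x)"
  by (rule has_field_derivative_Re[OF smooth_hasd])

lemma cont_pos_near:
  fixes g :: "real \<Rightarrow> real"
  assumes "isCont g a" "g a > 0"
  shows "\<exists>d>0. \<forall>x. x \<noteq> a \<and> dist x a < d \<longrightarrow> g x > 0"
proof -
  have "eventually (\<lambda>x. 0 < g x) (at a)"
    using order_tendstoD(1)[OF assms(1)[unfolded isCont_def] assms(2)] .
  then show ?thesis by (simp add: eventually_at)
qed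

lemma sign_a:
  assumes "smooth_fun f" "zero_at_least f a m" "s * Re ((cderiv ^^ m) f a) > 0"
  shows "\<exists>e>0. \<forall>x. a < x \<and> x < a + e \<longrightarrow> s * Re (f x) > 0"
  using assms
proof (induction m arbitrary: f)
  case 0
  have "isCont (\<lambda>x. s * Re (f x)) a"
    using has_vector_derivative_continuous[OF smooth_hasd[OF 0(1)]]
    by (intro continuous_intros) auto
  then obtain d where "d > 0" "\<forall>x. x \<noteq> a \<and> dist x a < d \<longrightarrow> s * Re (f x) > 0"
    using cont_pos_near[where g="\<lambda>x. s * Re (f x)" and a=a] 0 by auto
  then show ?case by (intro exI[of _ d]) (auto simp: dist_real_def)
next
  case (Suc m)
  have fa: "f a = 0" and z: "zero_at_least (cderiv f) a m" using Suc.prems(2) by (auto simp: zal_Suc)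
  have "s * Re ((cderiv ^^ m) (cderiv f) a) > 0" using Suc.prems(3) by (simp add: cderiv_Suc')
  then obtain e where e: "e > 0" "\<forall>x. a < x \<and> x < a + e \<longrightarrow> s * Re (cderiv f x) > 0"
    using Suc.IH[OF smooth_cderiv[OF Suc.prems(1)] z] by blast
  show ?case
  proof (intro exI[of _ e] conjI allI impI)
    fix x assume x: "a < x \<and> x < a + e"
    obtain z where z: "a < z" "z < x" "Re (f x) - Re (f a) = (x - a) * Re (cderiv f z)"
      using MVT2[of a x "\<lambda>t. Re (f t)" "\<lambda>t. Re (cderiv f t)"] x Re_hasd[OF Suc.prems(1)] by blast
    have q: "s * Re (cderiv f z) > 0" using e z x by auto
    have xa: "x - a > 0" using x by simp
    have p: "(x - a) * (s * Re (cderiv f z)) > 0" using mult_pos_pos[OF xa q] .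
    have r: "Re (f x) = (x - a) * Re (cderiv f z)" using z(3) fa by simp
    have "s * Re (f x) = (x - a) * (s * Re (cderiv f z))" unfolding r by (simp add: mult_ac)
    then show "s * Re (f x) > 0" using p by linarith
  qed (use e in auto)
qed

lemma sign_b:
  assumes "smooth_fun f" "zero_at_least f b m" "(-1) ^ m * s * Re ((cderiv ^^ m) f b) > 0"
  shows "\<exists>e>0. \<forall>x. b - e < x \<and> x < b \<longrightarrow> s * Re (f x) > 0"
  using assms
proof (induction m arbitrary: f s)
  case 0
  have "isCont (\<lambda>x. s * Re (f x)) b"
    using has_vector_derivative_continuous[OF smooth_hasd[OF 0(1)]]
    by (intro continuous_intros) auto
  then obtain d where "d > 0" "\<forall>x. x \<noteq> b \<and> dist x b < d \<longrightarrow> s * Re (f x) > 0"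
    using cont_pos_near[where g="\<lambda>x. s * Re (f x)" and a=b] 0 by auto
  then show ?case by (intro exI[of _ d]) (auto simp: dist_real_def)
next
  case (Suc m)
  have fb: "f b = 0" and z: "zero_at_least (cderiv f) b m" using Suc.prems(2) by (auto simp: zal_Suc)
  have "(-1) ^ m * (-s) * Re ((cderiv ^^ m) (cderiv f) b) > 0" using Suc.prems(3) by (simp add: cderiv_Suc')
  then obtain e where e: "e > 0" "\<forall>x. b - e < x \<and> x < b \<longrightarrow> (-s) * Re (cderiv f x) > 0"
    using Suc.IH[OF smooth_cderiv[OF Suc.prems(1)] z] by blast
  show ?case
  proof (intro exI[of _ e] conjI allI impI)
    fix x assume x: "b - e < x \<and> x < b"
    obtain z where z: "x < z" "z < b" "Re (f b) - Re (f x) = (b - x) * Re (cderiv f z)"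
      using MVT2[of x b "\<lambda>t. Re (f t)" "\<lambda>t. Re (cderiv f t)"] x Re_hasd[OF Suc.prems(1)] by blast
    have q: "(-s) * Re (cderiv f z) > 0" using e z x by auto
    have xb: "b - x > 0" using x by simp
    have p: "(b - x) * ((-s) * Re (cderiv f z)) > 0" using mult_pos_pos[OF xb q] .
    have r: "Re (f x) = - ((b - x) * Re (cderiv f z))" using z(3) fb by simp
    have "s * Re (f x) = (b - x) * ((-s) * Re (cderiv f z))" unfolding r by (simp add: mult_ac)
    then show "s * Re (f x) > 0" using p by linarith
  qed (use e in auto)
qed

lemma real_Re_nz: "z \<in> \<real> \<Longrightarrow> z \<noteq> 0 \<Longrightarrow> Re z \<noteq> 0"
  by (metis Reals_cases complex_of_real_def Re_complex_of_real of_real_0)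

lemma nonneg_a:
  assumes ab: "a < b" and sf: "smooth_fun f" and nn: "\<forall>x\<in>{a..b}. f x \<in> \<real> \<and> Re (f x) \<ge> 0"
    and ex: "zero_order_exactly f a m"
  shows "Re ((cderiv ^^ m) f a) > 0"
proof (rule ccontr)
  assume "\<not> ?thesis"
  moreover have "Re ((cderiv ^^ m) f a) \<noteq> 0"
    using real_jets[OF ab sf] nn ex ab by (intro real_Re_nz) (auto simp: zero_order_exactly_def)
  ultimately have neg: "(-1) * Re ((cderiv ^^ m) f a) > 0" by simp
  have z: "zero_at_least f a m" using ex by (simp add: zero_order_exactly_def)
  from sign_a[OF sf z neg] obtain e where e: "e > 0" "\<forall>x. a < x \<and> x < a + e \<longrightarrow> (-1) * Re (f x) > 0"
    by blast
  define d where "d = min e (b - a)"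
  define x where "x = a + d / 2"
  have "d > 0" "d \<le> e" "d \<le> b - a" using e ab by (auto simp: d_def)
  note mm = this
  have "a < x" using mm x_def by linarith
  have "x < a + e" using mm x_def by linarith
  have "x \<le> b" using mm x_def by linarith
  have "0 < -1 * Re (f x)" using e(2) \<open>a < x\<close> \<open>x < a + e\<close> by blast
  moreover have "0 \<le> Re (f x)" using nn \<open>a < x\<close> \<open>x \<le> b\<close> by auto
  ultimately show False by linarith
qed

lemma nonneg_b:
  assumes ab: "a < b" and sf: "smooth_fun f" and nn: "\<forall>x\<in>{a..b}. f x \<in> \<real> \<and> Re (f x) \<ge> 0"
    and ex: "zero_order_exactly f b m"
  shows "(-1) ^ m * Re ((cderiv ^^ m) f b) > 0"
proof (rule ccontr)
  assume "\<not> ?thesis"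
  moreover have "Re ((cderiv ^^ m) f b) \<noteq> 0"
    using real_jets[OF ab sf] nn ex ab by (intro real_Re_nz) (auto simp: zero_order_exactly_def)
  ultimately have "(-1) ^ m * (-1) * Re ((cderiv ^^ m) f b) > 0"
    by (cases "even m") auto
  note neg = this
  have z: "zero_at_least f b m" using ex by (simp add: zero_order_exactly_def)
  from sign_b[OF sf z neg] obtain e where e: "e > 0" "\<forall>x. b - e < x \<and> x < b \<longrightarrow> (-1) * Re (f x) > 0"
    by blast
  define d where "d = min e (b - a)"
  define x where "x = b - d / 2"
  have "d > 0" "d \<le> e" "d \<le> b - a" using e ab by (auto simp: d_def)
  note mm = this
  have "b - e < x" using mm x_def by linarith
  have "x < b" using mm x_def by linarith
  have "a \<le> x" using mm x_def by linarith
  have "0 < -1 * Re (f x)" using e(2) \<open>b - e < x\<close> \<open>x < b\<close> by blast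
  moreover have "0 \<le> Re (f x)" using nn \<open>a \<le> x\<close> \<open>x < b\<close> by auto
  ultimately show False by linarith
qed


lemma zal_0[simp]: "zero_at_least f c 0"
  by (simp add: zero_at_least_def)

lemma zal_1: "zero_at_least f c (Suc 0) \<longleftrightarrow> f c = 0"
  by (simp add: zero_at_least_def)

lemma zal_pos: "zero_at_least f c t \<Longrightarrow> 1 \<le> t \<Longrightarrow> f c = 0"
  unfolding zero_at_least_def by (drule spec[of _ 0]) auto

lemma zal_diff_op:
  assumes "smooth_fun f" "zero_at_least f c t"
  shows "zero_at_least (diff_op \<mu> f) c (t - 1)"
  using assms(2) unfolding zero_at_least_def diff_op_smooth_jets(2)[OF assms(1)]
  by (metis add_diff_cancel_left' cancel_comm_monoid_add_class.diff_cancel diff_Suc_eq_diff_pred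
      less_diff_conv less_imp_diff_less mult_zero_right plus_1_eq_Suc zero_less_diff)

lemma rolle_D:
  fixes \<mu> :: real
  assumes ab: "a < b" and sf: "smooth_fun \<phi>" and re: "\<forall>y\<in>{a..b}. \<phi> y \<in> \<real>"
    and x: "a \<le> x1" "x1 < x2" "x2 \<le> b" and z: "\<phi> x1 = 0" "\<phi> x2 = 0"
  shows "\<exists>\<xi>. x1 < \<xi> \<and> \<xi> < x2 \<and> diff_op (of_real \<mu>) \<phi> \<xi> = 0"
proof -
  define h where "h t = exp (- \<mu> * t) * Re (\<phi> t)" for t
  have d: "DERIV h t :> (- \<mu> * exp (- \<mu> * t)) * Re (\<phi> t) + Re (cderiv \<phi> t) * exp (- \<mu> * t)" for t
  proof -
    have "DERIV (\<lambda>t. exp (- \<mu> * t)) t :> - \<mu> * exp (- \<mu> * t)"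
      by (auto intro!: derivative_eq_intros)
    from DERIV_mult[OF this Re_hasd[OF sf, of t]] show ?thesis unfolding h_def by simp
  qed
  obtain \<xi> where xi: "x1 < \<xi>" "\<xi> < x2"
    "h x2 - h x1 = (x2 - x1) * ((- \<mu> * exp (- \<mu> * \<xi>)) * Re (\<phi> \<xi>) + Re (cderiv \<phi> \<xi>) * exp (- \<mu> * \<xi>))"
    using MVT2[OF x(2) d] by blast
  have "h x2 - h x1 = 0" using z by (simp add: h_def)
  then have "(- \<mu> * exp (- \<mu> * \<xi>)) * Re (\<phi> \<xi>) + Re (cderiv \<phi> \<xi>) * exp (- \<mu> * \<xi>) = 0"
    using xi x by simp
  then have "exp (- \<mu> * \<xi>) * (Re (cderiv \<phi> \<xi>) - \<mu> * Re (\<phi> \<xi>)) = 0" by (simp add: algebra_simps)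
  then have r0: "Re (diff_op (of_real \<mu>) \<phi> \<xi>) = 0" by (simp add: diff_op_def)
  have xiab: "\<xi> \<in> {a..b}" using xi x by auto
  have "cderiv \<phi> \<xi> \<in> \<real>" using real_jets[OF ab sf re, of 1] xiab by simp
  moreover have "\<phi> \<xi> \<in> \<real>" using re xiab by simp
  ultimately have "diff_op (of_real \<mu>) \<phi> \<xi> \<in> \<real>" by (simp add: diff_op_def)
  then have "diff_op (of_real \<mu>) \<phi> \<xi> = 0" using r0 by (metis Reals_cases Re_complex_of_real of_real_0)
  then show ?thesis using xi by blast
qed

lemma ecz:
  assumes ec: "ext_chebyshev W q a b" and phi: "\<phi> \<in> W" and ab: "a < b" and rs: "r + s = q"
    and za: "zero_at_least \<phi> a r" and zb: "zero_at_least \<phi> b s"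
    and extra: "(\<exists>z\<in>{a<..<b}. \<phi> z = 0) \<or> zero_at_least \<phi> a (Suc r)"
  shows "\<forall>x\<in>{a..b}. \<phi> x = 0"
proof (rule ccontr)
  assume "\<not> ?thesis"
  then have bound: "\<And>S k. finite S \<Longrightarrow> S \<subseteq> {a..b} \<Longrightarrow> (\<forall>c\<in>S. zero_at_least \<phi> c (k c)) \<Longrightarrow> sum k S \<le> q"
    using ec phi unfolding ext_chebyshev_def by blast
  from extra show False
  proof
    assume "\<exists>z\<in>{a<..<b}. \<phi> z = 0"
    then obtain z where z: "a < z" "z < b" "\<phi> z = 0" by auto
    define k where "k c = (if c = a then r else if c = b then s else 1)" for c
    have "sum k {a, z, b} \<le> q"
      by (rule bound) (use z za zb in \<open>auto simp: k_def zal_1\<close>)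
    moreover have "sum k {a, z, b} = r + 1 + s" using z by (simp add: k_def)
    ultimately show False using rs by simp
  next
    assume zs: "zero_at_least \<phi> a (Suc r)"
    define k where "k c = (if c = a then Suc r else s)" for c
    have "sum k {a, b} \<le> q"
      by (rule bound) (use zs zb ab in \<open>auto simp: k_def\<close>)
    moreover have "sum k {a, b} = Suc r + s" using ab by (simp add: k_def)
    ultimately show False using rs by simp
  qed
qed

lemma rollez:
  fixes \<mu> :: real
  assumes ab: "a < b" and ec: "ext_chebyshev (exp_poly_space rest) q a b"
    and phi: "\<phi> \<in> exp_poly_space (of_real \<mu> # rest)" and re: "\<forall>y\<in>{a..b}. \<phi> y \<in> \<real>"
    and rs: "r + s = q + 1"
    and za: "zero_at_least \<phi> a r" and zb: "zero_at_least \<phi> b s"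
    and extra: "(\<exists>z\<in>{a<..<b}. \<phi> z = 0) \<or> zero_at_least \<phi> a (Suc r)"
  shows "\<forall>x\<in>{a..b}. \<phi> x = 0"
proof -
  have sf: "smooth_fun \<phi>" using phi by (simp add: exp_poly_space_def)
  define \<psi> where "\<psi> = diff_op (of_real \<mu>) \<phi>"
  have psi: "\<psi> \<in> exp_poly_space rest" unfolding \<psi>_def by (rule space_diff_op[OF phi])
  have zpa: "zero_at_least \<psi> a (r - 1)" "zero_at_least \<psi> b (s - 1)"
    unfolding \<psi>_def using zal_diff_op[OF sf] za zb by auto
  have psi0: "\<forall>x\<in>{a..b}. \<psi> x = 0"
  proof (rule ccontr)
    assume "\<not> ?thesis"
    then have bound: "\<And>S k. finite S \<Longrightarrow> S \<subseteq> {a..b} \<Longrightarrow> (\<forall>c\<in>S. zero_at_least \<psi> c (k c)) \<Longrightarrow> sum k S \<le> q"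
      using ec psi unfolding ext_chebyshev_def by blast
    from extra show False
    proof
      assume "\<exists>z\<in>{a<..<b}. \<phi> z = 0"
      then obtain z where z: "a < z" "z < b" "\<phi> z = 0" by auto
      have "\<exists>\<xi>. a < \<xi> \<and> \<xi> < z \<and> (r \<ge> 1 \<longrightarrow> \<psi> \<xi> = 0)"
      proof (cases "r \<ge> 1")
        case True
        then have "\<phi> a = 0" using za zal_pos by blast
        then show ?thesis using rolle_D[OF ab sf re order_refl z(1) _ _ z(3), of \<mu>] z unfolding \<psi>_def by auto
      next
        case False
        then show ?thesis using z by (intro exI[of _ "(a + z) / 2"]) auto
      qed
      then obtain \<xi>1 where x1: "a < \<xi>1" "\<xi>1 < z" "r \<ge> 1 \<longrightarrow> \<psi> \<xi>1 = 0" by blast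
      have "\<exists>\<xi>. z < \<xi> \<and> \<xi> < b \<and> (s \<ge> 1 \<longrightarrow> \<psi> \<xi> = 0)"
      proof (cases "s \<ge> 1")
        case True
        then have "\<phi> b = 0" using zb zal_pos by blast
        then show ?thesis using rolle_D[OF ab sf re _ z(2) order_refl z(3), of \<mu>] z unfolding \<psi>_def by auto
      next
        case False
        then show ?thesis using z by (intro exI[of _ "(z + b) / 2"]) auto
      qed
      then obtain \<xi>2 where x2: "z < \<xi>2" "\<xi>2 < b" "s \<ge> 1 \<longrightarrow> \<psi> \<xi>2 = 0" by blast
      define k where "k c = (if c = a then r - 1 else if c = b then s - 1 else if c = \<xi>1 then (if r \<ge> 1 then 1 else 0) else (if s \<ge> 1 then 1 else 0))" for c
      have "sum k {a, \<xi>1, \<xi>2, b} \<le> q"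
      proof (rule bound)
        show "\<forall>c\<in>{a, \<xi>1, \<xi>2, b}. zero_at_least \<psi> c (k c)"
          using x1 x2 z zpa ab by (auto simp: k_def zal_1)
      qed (use x1 x2 z in auto)
      moreover have "sum k {a, \<xi>1, \<xi>2, b} = (r - 1) + (if r \<ge> 1 then 1 else 0) + (if s \<ge> 1 then 1 else 0) + (s - 1)"
        using x1 x2 z by (simp add: k_def)
      ultimately show False using rs by (cases r; cases s) auto
    next
      assume zs: "zero_at_least \<phi> a (Suc r)"
      then have pa: "\<phi> a = 0" using zal_pos by simp
      have zr: "zero_at_least \<psi> a r" unfolding \<psi>_def using zal_diff_op[OF sf zs] by simp
      have "\<exists>\<xi>. a < \<xi> \<and> \<xi> < b \<and> (s \<ge> 1 \<longrightarrow> \<psi> \<xi> = 0)"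
      proof (cases "s \<ge> 1")
        case True
        then have "\<phi> b = 0" using zb zal_pos by blast
        then show ?thesis using rolle_D[OF ab sf re order_refl ab order_refl pa, of \<mu>] unfolding \<psi>_def by auto
      next
        case False
        then show ?thesis using ab by (intro exI[of _ "(a + b) / 2"]) auto
      qed
      then obtain \<xi> where x: "a < \<xi>" "\<xi> < b" "s \<ge> 1 \<longrightarrow> \<psi> \<xi> = 0" by blast
      define k where "k c = (if c = a then r else if c = b then s - 1 else (if s \<ge> 1 then 1 else 0))" for c
      have "sum k {a, \<xi>, b} \<le> q"
      proof (rule bound)
        show "\<forall>c\<in>{a, \<xi>, b}. zero_at_least \<psi> c (k c)"
          using x zr zpa ab by (auto simp: k_def zal_1)
      qed (use x in auto)
      moreover have "sum k {a, \<xi>, b} = r + (if s \<ge> 1 then 1 else 0) + (s - 1)"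
        using x by (simp add: k_def)
      ultimately show False using rs by (cases s) auto
    qed
  qed
  have ode: "\<forall>x\<in>{a..b}. \<phi> x = exp (of_real \<mu> * of_real (x - a)) * \<phi> a"
    by (rule ode_interval[OF sf]) (use ab psi0 in \<open>auto simp: \<psi>_def\<close>)
  have "\<phi> a = 0"
    using extra
  proof
    assume "\<exists>z\<in>{a<..<b}. \<phi> z = 0"
    then obtain z where z: "a < z" "z < b" "\<phi> z = 0" by auto
    have "\<phi> z = exp (of_real \<mu> * of_real (z - a)) * \<phi> a" by (rule bspec[OF ode]) (use z in auto)
    then show "\<phi> a = 0" using z by simp
  next
    assume "zero_at_least \<phi> a (Suc r)" then show "\<phi> a = 0" using zal_pos by simp
  qed
  then show ?thesis using ode by simp
qed


lemma sum_single:
  fixes m :: nat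
  assumes "k0 \<le> m" "\<forall>j\<le>m. j \<noteq> k0 \<longrightarrow> f j = 0"
  shows "(\<Sum>j\<le>m. f j) = (f k0 :: complex)"
proof -
  have "(\<Sum>j\<le>m. f j) = (\<Sum>j\<le>m. if j = k0 then f k0 else 0)"
    by (rule sum.cong) (use assms in auto)
  also have "\<dots> = f k0" using assms(1) by (subst sum.delta) auto
  finally show ?thesis .
qed

lemma smooth_cont: "smooth_fun f \<Longrightarrow> continuous_on S f"
  by (metis continuous_at_imp_continuous_on has_vector_derivative_continuous smooth_hasd)

lemma real_Re0: "z \<in> \<real> \<Longrightarrow> Re z = 0 \<Longrightarrow> z = 0"
  by (metis Reals_cases Re_complex_of_real of_real_0)

lemma Re_ofreal_mult: "Re (of_real c * z) = c * Re z"
  by simp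

lemma POS:
  fixes P :: "nat \<Rightarrow> real \<Rightarrow> complex" and u :: "nat \<Rightarrow> real" and \<mu> :: real
  assumes ab: "a < b" and m: "1 \<le> m"
    and sm: "\<forall>k\<le>m. smooth_fun (P k)"
    and re: "\<forall>k\<le>m. \<forall>x\<in>{a..b}. P k x \<in> \<real>"
    and za: "\<forall>k\<le>m. zero_at_least (P k) a k"
    and ja: "\<forall>k\<le>m. Re ((cderiv ^^ k) (P k) a) > 0"
    and zb: "\<forall>k\<le>m. zero_at_least (P k) b (m - k)"
    and jb: "\<forall>k\<le>m. (-1) ^ (m - k) * Re ((cderiv ^^ (m - k)) (P k) b) > 0"
    and sumD: "\<forall>x\<in>{a..b}. (\<Sum>j\<le>m. of_real (u j) * diff_op (of_real \<mu>) (P j) x) = 0"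
    and u0: "u 0 > 0"
    and Z: "\<forall>v k. 1 \<le> k \<longrightarrow> k \<le> m \<longrightarrow>
      zero_at_least (\<lambda>x. \<Sum>j\<le>m. of_real (v j) * diff_op (of_real \<mu>) (P j) x) a (k - 1) \<longrightarrow>
      zero_at_least (\<lambda>x. \<Sum>j\<le>m. of_real (v j) * diff_op (of_real \<mu>) (P j) x) b (m - k) \<longrightarrow>
      ((\<exists>z\<in>{a<..<b}. (\<Sum>j\<le>m. of_real (v j) * diff_op (of_real \<mu>) (P j) z) = 0) \<or>
        zero_at_least (\<lambda>x. \<Sum>j\<le>m. of_real (v j) * diff_op (of_real \<mu>) (P j) x) a k) \<longrightarrow>
      (\<forall>x\<in>{a..b}. (\<Sum>j\<le>m. of_real (v j) * diff_op (of_real \<mu>) (P j) x) = 0)"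
  shows "\<forall>k\<le>m. u k > 0"
    and "\<And>k. 1 \<le> k \<Longrightarrow> k \<le> m \<Longrightarrow>
      smooth_fun (\<lambda>x. \<Sum>j\<le>m. of_real (if k \<le> j then u j else 0) * diff_op (of_real \<mu>) (P j) x) \<and>
      (\<forall>x\<in>{a..b}. (\<Sum>j\<le>m. of_real (if k \<le> j then u j else 0) * diff_op (of_real \<mu>) (P j) x) \<in> \<real>) \<and>
      zero_at_least (\<lambda>x. \<Sum>j\<le>m. of_real (if k \<le> j then u j else 0) * diff_op (of_real \<mu>) (P j) x) a (k - 1) \<and>
      Re ((cderiv ^^ (k - 1)) (\<lambda>x. \<Sum>j\<le>m. of_real (if k \<le> j then u j else 0) * diff_op (of_real \<mu>) (P j) x) a) > 0 \<and>
      zero_at_least (\<lambda>x. \<Sum>j\<le>m. of_real (if k \<le> j then u j else 0) * diff_op (of_real \<mu>) (P j) x) b (m - k) \<and>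
      (-1) ^ (m - k) * Re ((cderiv ^^ (m - k)) (\<lambda>x. \<Sum>j\<le>m. of_real (if k \<le> j then u j else 0) * diff_op (of_real \<mu>) (P j) x) b) > 0"
proof -
  define D where "D j = diff_op (of_real \<mu>) (P j)" for j
  have smD: "\<forall>j\<le>m. smooth_fun (D j)" using sm by (simp add: D_def diff_op_smooth_jets)
  have jD: "(cderiv ^^ i) (D j) x = (cderiv ^^ Suc i) (P j) x - of_real \<mu> * (cderiv ^^ i) (P j) x"
    if "j \<le> m" for j i x using sm that by (simp add: D_def diff_op_smooth_jets)
  have DA0: "(cderiv ^^ i) (D j) a = 0" if "j \<le> m" "Suc i < j" for j i
  proof -
    have "(cderiv ^^ Suc i) (P j) a = 0" "(cderiv ^^ i) (P j) a = 0"
      using za that unfolding zero_at_least_def by (auto simp del: funpow.simps)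
    then show ?thesis using jD[of j i a] that by (simp del: funpow.simps)
  qed
  have DA1: "(cderiv ^^ (j - 1)) (D j) a = (cderiv ^^ j) (P j) a" if "j \<le> m" "1 \<le> j" for j
  proof -
    have "(cderiv ^^ (j - 1)) (P j) a = 0"
      using za that unfolding zero_at_least_def by (auto simp del: funpow.simps)
    moreover have "Suc (j - 1) = j" using that by simp
    ultimately show ?thesis using jD[of j "j - 1" a] that by (simp del: funpow.simps)
  qed
  have DB0: "(cderiv ^^ i) (D j) b = 0" if "j \<le> m" "Suc i < m - j" for j i
  proof -
    have "(cderiv ^^ Suc i) (P j) b = 0" "(cderiv ^^ i) (P j) b = 0"
      using zb that unfolding zero_at_least_def by (auto simp del: funpow.simps)
    then show ?thesis using jD[of j i b] that by (simp del: funpow.simps)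
  qed
  have DB1: "(cderiv ^^ (m - j - 1)) (D j) b = (cderiv ^^ (m - j)) (P j) b" if "j < m" for j
  proof -
    have "(cderiv ^^ (m - j - 1)) (P j) b = 0" using zb that unfolding zero_at_least_def by (auto simp del: funpow.simps)
    moreover have "Suc (m - j - 1) = m - j" using that by simp
    ultimately show ?thesis using jD[of j "m - j - 1" b] that by (simp del: funpow.simps)
  qed
  have reD: "\<forall>x\<in>{a..b}. D j x \<in> \<real>" if "j \<le> m" for j
  proof
    fix x assume x: "x \<in> {a..b}"
    have "cderiv (P j) x \<in> \<real>" using real_jets[OF ab, of "P j" 1] sm re that x by simp
    moreover have "P j x \<in> \<real>" using re that x by simp
    ultimately show "D j x \<in> \<real>" by (simp add: D_def diff_op_def)
  qed
  define c where "c k j = (if k \<le> j then u j else 0)" for k j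
  define \<Phi> where "\<Phi> k = (\<lambda>x. \<Sum>j\<le>m. of_real (c k j) * D j x)" for k
  define \<Psi> where "\<Psi> k = (\<lambda>x. \<Sum>j\<le>m. of_real (if j < k then - u j else 0) * D j x)" for k
  have smPhi: "smooth_fun (\<Phi> k)" for k unfolding \<Phi>_def by (rule lc_smooth[OF smD])
  have smPsi: "smooth_fun (\<Psi> k)" for k unfolding \<Psi>_def by (rule lc_smooth[OF smD])
  have rePhi: "\<forall>x\<in>{a..b}. \<Phi> k x \<in> \<real>" for k
    unfolding \<Phi>_def using reD by (auto intro!: sum_in_Reals)
  have PhiPsi: "\<forall>x\<in>{a..b}. \<Phi> k x = \<Psi> k x" for k
  proof
    fix x assume x: "x \<in> {a..b}"
    have "\<Phi> k x - \<Psi> k x = (\<Sum>j\<le>m. of_real (u j) * D j x)"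
      unfolding \<Phi>_def \<Psi>_def sum_subtractf[symmetric]
      by (rule sum.cong) (auto simp: c_def algebra_simps)
    also have "\<dots> = 0" using sumD x by (simp add: D_def)
    finally show "\<Phi> k x = \<Psi> k x" by simp
  qed
  have jPhi: "(cderiv ^^ i) (\<Phi> k) x = (\<Sum>j\<le>m. of_real (c k j) * (cderiv ^^ i) (D j) x)" for i k x
    unfolding \<Phi>_def lc_jets[OF smD] by simp
  have jPsi: "(cderiv ^^ i) (\<Psi> k) x = (\<Sum>j\<le>m. of_real (if j < k then - u j else 0) * (cderiv ^^ i) (D j) x)" for i k x
    unfolding \<Psi>_def lc_jets[OF smD] by simp
  have PhiA0: "(cderiv ^^ i) (\<Phi> k) a = 0" if "i < k - 1" for i k
    unfolding jPhi by (rule sum.neutral) (use that DA0 in \<open>auto simp: c_def\<close>)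
  have PhiA1: "(cderiv ^^ (k - 1)) (\<Phi> k) a = of_real (u k) * (cderiv ^^ k) (P k) a" if "1 \<le> k" "k \<le> m" for k
  proof -
    have "(cderiv ^^ (k - 1)) (\<Phi> k) a = of_real (c k k) * (cderiv ^^ (k - 1)) (D k) a"
      unfolding jPhi by (rule sum_single) (use that DA0 in \<open>auto simp: c_def\<close>)
    then show ?thesis using DA1 that by (simp add: c_def)
  qed
  have PhiB: "(cderiv ^^ i) (\<Phi> k) b = (cderiv ^^ i) (\<Psi> k) b" for i k
    using jets_agree[OF ab smPhi smPsi PhiPsi] ab by auto
  have PhiB0: "(cderiv ^^ i) (\<Phi> k) b = 0" if "1 \<le> k" "k \<le> m" "i < m - k" for i k
    unfolding PhiB jPsi by (rule sum.neutral) (use that DB0 in auto)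
  have PhiB1: "(cderiv ^^ (m - k)) (\<Phi> k) b = of_real (- u (k - 1)) * (cderiv ^^ (m - (k - 1))) (P (k - 1)) b"
    if "1 \<le> k" "k \<le> m" for k
  proof -
    have "(cderiv ^^ (m - k)) (\<Phi> k) b = of_real (if k - 1 < k then - u (k - 1) else 0) * (cderiv ^^ (m - k)) (D (k - 1)) b"
      unfolding PhiB jPsi by (rule sum_single) (use that DB0 in auto)
    then have "(cderiv ^^ (m - k)) (\<Phi> k) b = of_real (- u (k - 1)) * (cderiv ^^ (m - k)) (D (k - 1)) b"
      using that by simp
    moreover have "m - (k - 1) - 1 = m - k" using that by simp
    ultimately show ?thesis using DB1[of "k - 1"] that by simp
  qed
  have zPhiA: "zero_at_least (\<Phi> k) a (k - 1)" for k
    unfolding zero_at_least_def using PhiA0 by blast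
  have zPhiB: "zero_at_least (\<Phi> k) b (m - k)" if "1 \<le> k" "k \<le> m" for k
    unfolding zero_at_least_def using PhiB0 that by blast
  have signB: "(-1) ^ (m - k) * Re ((cderiv ^^ (m - k)) (\<Phi> k) b) = u (k - 1) * ((-1) ^ (m - (k - 1)) * Re ((cderiv ^^ (m - (k - 1))) (P (k - 1)) b))"
    if "1 \<le> k" "k \<le> m" for k
  proof -
    have "m - (k - 1) = Suc (m - k)" using that by simp
    then show ?thesis unfolding PhiB1[OF that] by (simp add: Re_ofreal_mult)
  qed
  have Zk: "\<forall>x\<in>{a..b}. \<Phi> k x = 0" if "1 \<le> k" "k \<le> m"
    "(\<exists>z\<in>{a<..<b}. \<Phi> k z = 0) \<or> zero_at_least (\<Phi> k) a k" for k
    using Z[rule_format, where v="c k" and k=k, OF that(1,2)] zPhiA zPhiB[OF that(1,2)] that(3) unfolding \<Phi>_def D_def by blast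
  have upos: "u k > 0" if "k \<le> m" for k
    using that
  proof (induction k)
    case 0 then show ?case using u0 by simp
  next
    case (Suc k)
    have k1: "1 \<le> Suc k" "Suc k \<le> m" using Suc.prems by auto
    have uk: "u k > 0" using Suc by simp
    have "(-1) ^ (m - Suc k) * Re ((cderiv ^^ (m - Suc k)) (\<Phi> (Suc k)) b) > 0"
      unfolding signB[OF k1] using uk jb Suc.prems by simp
    then have "(-1) ^ (m - Suc k) * 1 * Re ((cderiv ^^ (m - Suc k)) (\<Phi> (Suc k)) b) > 0" by simp
    from sign_b[OF smPhi zPhiB[OF k1] this] obtain e where
      e: "e > 0" "\<forall>x. b - e < x \<and> x < b \<longrightarrow> 1 * Re (\<Phi> (Suc k) x) > 0" by blast
    define d where "d = min e (b - a)"
    define x2 where "x2 = b - d / 2"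
    have "d > 0" "d \<le> e" "d \<le> b - a" using e ab by (auto simp: d_def)
    then have x2: "b - e < x2" "x2 < b" "a < x2" using x2_def by linarith+
    have px2: "Re (\<Phi> (Suc k) x2) > 0" using e x2 by auto
    have nz: "\<not> (\<forall>x\<in>{a..b}. \<Phi> (Suc k) x = 0)" using px2 x2 by force
    show ?case
    proof (rule ccontr)
      assume "\<not> u (Suc k) > 0"
      then have "u (Suc k) = 0 \<or> u (Suc k) < 0" by linarith
      then show False
      proof
        assume u0': "u (Suc k) = 0"
        have "zero_at_least (\<Phi> (Suc k)) a (Suc k)"
          unfolding zero_at_least_def
        proof (intro allI impI)
          fix i assume "i < Suc k"
          then have "i < k \<or> i = k" by auto
          then show "(cderiv ^^ i) (\<Phi> (Suc k)) a = 0"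
            using PhiA0[of i "Suc k"] PhiA1[OF k1] u0' by auto
        qed
        then show False using Zk[OF k1] nz by blast
      next
        assume un: "u (Suc k) < 0"
        have "Re ((cderiv ^^ Suc k) (P (Suc k)) a) > 0" using ja k1 by blast
        then have "(-1) * Re ((cderiv ^^ (Suc k - 1)) (\<Phi> (Suc k)) a) > 0"
          unfolding PhiA1[OF k1] Re_ofreal_mult using un by (simp add: mult_neg_pos)
        from sign_a[OF smPhi zPhiA this] obtain e' where
          e': "e' > 0" "\<forall>x. a < x \<and> x < a + e' \<longrightarrow> (-1) * Re (\<Phi> (Suc k) x) > 0" by blast
        define d' where "d' = min e' (x2 - a)"
        define x1 where "x1 = a + d' / 2"
        have "d' > 0" "d' \<le> e'" "d' \<le> x2 - a" using e' x2 by (auto simp: d'_def)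
        then have x1: "a < x1" "x1 < a + e'" "x1 < x2" using x1_def by linarith+
        have px1: "Re (\<Phi> (Suc k) x1) \<le> 0" using e' x1 by force
        have "continuous_on {x1..x2} (\<lambda>t. Re (\<Phi> (Suc k) t))"
          by (intro continuous_intros smooth_cont[OF smPhi])
        then obtain z where z: "x1 \<le> z" "z \<le> x2" "Re (\<Phi> (Suc k) z) = 0"
          using IVT'[of "\<lambda>t. Re (\<Phi> (Suc k) t)" x1 0 x2] px1 px2 x1 by auto
        have zab: "z \<in> {a<..<b}" using z x1 x2 by auto
        then have "\<Phi> (Suc k) z = 0" using real_Re0 rePhi z by auto
        then show False using Zk[OF k1] nz zab by blast
      qed
    qed
  qed
  show "\<forall>k\<le>m. u k > 0" using upos by blast
  fix k assume k1: "1 \<le> k" "k \<le> m"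
  have ja': "Re ((cderiv ^^ (k - 1)) (\<Phi> k) a) > 0"
    unfolding PhiA1[OF k1] Re_ofreal_mult using upos ja k1 by simp
  have A: "u (k - 1) > 0" using upos k1 by simp
  have B: "(-1) ^ (m - (k - 1)) * Re ((cderiv ^^ (m - (k - 1))) (P (k - 1)) b) > 0"
    using jb[rule_format, of "k - 1"] k1 by simp
  have jb': "(-1) ^ (m - k) * Re ((cderiv ^^ (m - k)) (\<Phi> k) b) > 0"
    unfolding signB[OF k1] by (rule mult_pos_pos[OF A B])
  show "smooth_fun (\<lambda>x. \<Sum>j\<le>m. of_real (if k \<le> j then u j else 0) * diff_op (of_real \<mu>) (P j) x) \<and>
      (\<forall>x\<in>{a..b}. (\<Sum>j\<le>m. of_real (if k \<le> j then u j else 0) * diff_op (of_real \<mu>) (P j) x) \<in> \<real>) \<and>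
      zero_at_least (\<lambda>x. \<Sum>j\<le>m. of_real (if k \<le> j then u j else 0) * diff_op (of_real \<mu>) (P j) x) a (k - 1) \<and>
      Re ((cderiv ^^ (k - 1)) (\<lambda>x. \<Sum>j\<le>m. of_real (if k \<le> j then u j else 0) * diff_op (of_real \<mu>) (P j) x) a) > 0 \<and>
      zero_at_least (\<lambda>x. \<Sum>j\<le>m. of_real (if k \<le> j then u j else 0) * diff_op (of_real \<mu>) (P j) x) b (m - k) \<and>
      (-1) ^ (m - k) * Re ((cderiv ^^ (m - k)) (\<lambda>x. \<Sum>j\<le>m. of_real (if k \<le> j then u j else 0) * diff_op (of_real \<mu>) (P j) x) b) > 0"
    using smPhi[of k] rePhi[of k] zPhiA[of k] ja' zPhiB[OF k1] jb' unfolding \<Phi>_def c_def D_def by blast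
qed


lemma realify:
  assumes "y = (\<Sum>k\<le>n. w k * q k)" "y \<in> \<real>" "\<forall>k\<le>n. q k \<in> \<real>"
  shows "y = (\<Sum>k\<le>n. of_real (Re (w k)) * q k)"
proof -
  have pk: "q k = of_real (Re (q k))" if "k \<le> n" for k
    using assms(3) that by (metis Reals_cases Re_complex_of_real)
  have "y = of_real (Re y)" using assms(2) by (metis Reals_cases Re_complex_of_real)
  also have "Re y = (\<Sum>k\<le>n. Re (w k * q k))" using assms(1) by (simp add: Re_sum)
  also have "\<dots> = (\<Sum>k\<le>n. Re (w k) * Re (q k))"
  proof (rule sum.cong)
    fix k assume "k \<in> {..n}"
    then have "Im (q k) = 0" using assms(3) by (simp add: complex_is_Real_iff)
    then show "Re (w k * q k) = Re (w k) * Re (q k)" by simp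
  qed simp
  also have "complex_of_real \<dots> = (\<Sum>k\<le>n. of_real (Re (w k)) * of_real (Re (q k)))" by simp
  also have "\<dots> = (\<Sum>k\<le>n. of_real (Re (w k)) * q k)"
    by (rule sum.cong) (use pk in auto)
  finally show ?thesis .
qed

lemma diff_op_agree:
  assumes "a < b" "smooth_fun f" "smooth_fun g" "\<forall>y\<in>{a..b}. f y = g y" "x \<in> {a..b}"
  shows "diff_op \<mu> f x = diff_op \<mu> g x"
  using jets_agree[OF assms(1-4), of 1] assms(4,5) by (simp add: diff_op_def)

lemma real_diff_op:
  fixes \<mu> :: real
  assumes "a < b" "smooth_fun f" "\<forall>y\<in>{a..b}. f y \<in> \<real>"
  shows "\<forall>y\<in>{a..b}. diff_op (of_real \<mu>) f y \<in> \<real>"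
  using real_jets[OF assms, of 1] assms(3) by (simp add: diff_op_def)

lemma smooth_zero: "smooth_fun (\<lambda>_. 0)"
proof -
  have "(\<lambda>_. 0::complex) = (\<lambda>x. 0 * expf 0 x)" by simp
  then show ?thesis using expf_smooth by metis
qed

lemma lin_indep:
  fixes p :: "nat \<Rightarrow> real \<Rightarrow> complex"
  assumes ab: "a < b" and sm: "\<forall>k\<le>n. smooth_fun (p k)"
    and za: "\<forall>k\<le>n. zero_at_least (p k) a k" and nz: "\<forall>k\<le>n. (cderiv ^^ k) (p k) a \<noteq> 0"
    and eq: "\<forall>x\<in>{a..b}. (\<Sum>k\<le>n. w k * p k x) = 0"
  shows "\<forall>k\<le>n. w k = 0"
proof -
  have J: "(\<Sum>k\<le>n. w k * (cderiv ^^ j) (p k) a) = 0" for j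
  proof -
    have "\<forall>y\<in>{a..b}. (cderiv ^^ j) (\<lambda>x. \<Sum>k\<le>n. w k * p k x) y = (cderiv ^^ j) (\<lambda>_. 0) y"
      by (rule jets_agree[OF ab lc_smooth[OF sm] smooth_zero]) (use eq in auto)
    moreover have "(cderiv ^^ j) (\<lambda>_. 0::complex) = (\<lambda>_. 0)"
      using expf_jets[of j 0 0] by simp
    ultimately show ?thesis using ab unfolding lc_jets[OF sm] by auto
  qed
  have "w k = 0" if "k \<le> n" for k
    using that
  proof (induction k rule: less_induct)
    case (less k)
    have "(\<Sum>i\<le>n. w i * (cderiv ^^ k) (p i) a) = w k * (cderiv ^^ k) (p k) a"
    proof (rule sum_single)
      show "\<forall>j\<le>n. j \<noteq> k \<longrightarrow> w j * (cderiv ^^ k) (p j) a = 0"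
      proof (intro allI impI)
        fix j assume j: "j \<le> n" "j \<noteq> k"
        show "w j * (cderiv ^^ k) (p j) a = 0"
        proof (cases "j < k")
          case True then show ?thesis using less by simp
        next
          case False then have "k < j" using j by simp
          then show ?thesis using za j unfolding zero_at_least_def by auto
        qed
      qed
    qed (use less in auto)
    then show ?case using J[of k] nz less.prems by auto
  qed
  then show ?thesis by blast
qed

lemma abel_sum:
  fixes X :: "nat \<Rightarrow> complex" and c g :: "nat \<Rightarrow> real"
  shows "(\<Sum>i\<le>N. of_real (g (Suc i) - g i) * (\<Sum>j\<le>Suc N. of_real (if Suc i \<le> j then c j else 0) * X j))
    = (\<Sum>j\<le>Suc N. of_real (g j * c j) * X j) - of_real (g 0) * (\<Sum>j\<le>Suc N. of_real (c j) * X j)"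
proof -
  have tel: "(\<Sum>i\<le>N. if Suc i \<le> j then g (Suc i) - g i else 0) = g j - g 0" if "j \<le> Suc N" for j
  proof -
    have "(\<Sum>i\<le>N. if Suc i \<le> j then g (Suc i) - g i else 0) = (\<Sum>i\<in>{..N} \<inter> {i. i < j}. g (Suc i) - g i)"
      by (simp add: sum.inter_restrict Suc_le_eq)
    also have "{..N} \<inter> {i. i < j} = {..<j}" using that by auto
    also have "(\<Sum>i<j. g (Suc i) - g i) = g j - g 0" by (rule sum_lessThan_telescope)
    finally show ?thesis .
  qed
  have "(\<Sum>i\<le>N. of_real (g (Suc i) - g i) * (\<Sum>j\<le>Suc N. of_real (if Suc i \<le> j then c j else 0) * X j))
      = (\<Sum>i\<le>N. \<Sum>j\<le>Suc N. of_real (c j) * X j * of_real (if Suc i \<le> j then g (Suc i) - g i else 0))"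
    unfolding sum_distrib_left by (intro sum.cong refl) auto
  also have "\<dots> = (\<Sum>j\<le>Suc N. \<Sum>i\<le>N. of_real (c j) * X j * of_real (if Suc i \<le> j then g (Suc i) - g i else 0))"
    by (rule sum.swap)
  also have "\<dots> = (\<Sum>j\<le>Suc N. of_real (c j) * X j * of_real (g j - g 0))"
  proof (rule sum.cong[OF refl])
    fix j assume j: "j \<in> {..Suc N}"
    have "(\<Sum>i\<le>N. of_real (c j) * X j * of_real (if Suc i \<le> j then g (Suc i) - g i else 0))
        = of_real (c j) * X j * of_real (\<Sum>i\<le>N. if Suc i \<le> j then g (Suc i) - g i else 0)"
      by (simp only: sum_distrib_left of_real_sum)
    moreover have "(\<Sum>i\<le>N. if Suc i \<le> j then g (Suc i) - g i else 0) = g j - g 0" using tel[of j] j by simp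
    ultimately show "(\<Sum>i\<le>N. of_real (c j) * X j * of_real (if Suc i \<le> j then g (Suc i) - g i else 0))
        = of_real (c j) * X j * of_real (g j - g 0)" by (simp only:)
  qed
  also have "\<dots> = (\<Sum>j\<le>Suc N. of_real (g j * c j) * X j) - of_real (g 0) * (\<Sum>j\<le>Suc N. of_real (c j) * X j)"
  proof -
    have "(\<Sum>j\<le>Suc N. of_real (c j) * X j * of_real (g j - g 0))
        = (\<Sum>j\<le>Suc N. of_real (g j * c j) * X j - of_real (g 0) * (of_real (c j) * X j))"
      by (rule sum.cong) (simp_all add: algebra_simps)
    also have "\<dots> = (\<Sum>j\<le>Suc N. of_real (g j * c j) * X j) - (\<Sum>j\<le>Suc N. of_real (g 0) * (of_real (c j) * X j))"
      by (rule sum_subtractf)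
    finally show ?thesis by (simp only: sum_distrib_left)
  qed
  finally show ?thesis .
qed


lemma coef_unique:
  fixes p :: "nat \<Rightarrow> real \<Rightarrow> complex" and u u' :: "nat \<Rightarrow> real"
  assumes ab: "a < b" and sm: "\<forall>k\<le>n. smooth_fun (p k)"
    and za: "\<forall>k\<le>n. zero_at_least (p k) a k" and nz: "\<forall>k\<le>n. (cderiv ^^ k) (p k) a \<noteq> 0"
    and e1: "\<forall>x\<in>{a..b}. (\<Sum>k\<le>n. of_real (u k) * p k x) = F x"
    and e2: "\<forall>x\<in>{a..b}. (\<Sum>k\<le>n. of_real (u' k) * p k x) = F x"
  shows "\<forall>k\<le>n. u k = u' k"
proof -
  have "\<forall>x\<in>{a..b}. (\<Sum>k\<le>n. of_real (u k - u' k) * p k x) = 0"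
  proof
    fix x assume x: "x \<in> {a..b}"
    have "(\<Sum>k\<le>n. of_real (u k - u' k) * p k x) = (\<Sum>k\<le>n. of_real (u k) * p k x) - (\<Sum>k\<le>n. of_real (u' k) * p k x)"
      by (simp add: sum_subtractf[symmetric] algebra_simps)
    then show "(\<Sum>k\<le>n. of_real (u k - u' k) * p k x) = 0" using e1 e2 x by simp
  qed
  from lin_indep[OF ab sm za nz this] show ?thesis by simp
qed

theorem theorem9:
  fixes n :: nat and a b l0 l1 :: real and lam :: "nat \<Rightarrow> complex"
    and p :: "nat \<Rightarrow> real \<Rightarrow> complex"
  assumes "n \<ge> 2" and "a < b" and "l0 < l1"
    and "lam 0 = of_real l0" and "lam 1 = of_real l1"
    and "ext_chebyshev (exp_poly_space (map lam [2..<n+1])) (n - 2) a b"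
    and "closed_under_cnj (exp_poly_space (map lam [2..<n+1]))"
    and "bernstein_basis p n (exp_poly_space (map lam [0..<n+1])) a b"
    and "\<forall>k\<le>n. \<forall>x\<in>{a..b}. p k x \<in> \<real> \<and> Re (p k x) \<ge> 0"
  shows "\<exists>t \<alpha>. (\<forall>k\<le>n. t k \<in> {a..b} \<and> \<alpha> k > 0)
           \<and> (\<forall>x\<in>{a..b}. bern_op n t \<alpha> p (\<lambda>y. exp (l0 * y)) x = of_real (exp (l0 * x)))
           \<and> (\<forall>x\<in>{a..b}. bern_op n t \<alpha> p (\<lambda>y. exp (l1 * y)) x = of_real (exp (l1 * x)))
           \<and> (\<forall>t' \<alpha>'. (\<forall>k\<le>n. t' k \<in> {a..b} \<and> \<alpha>' k > 0)
                 \<and> (\<forall>x\<in>{a..b}. bern_op n t' \<alpha>' p (\<lambda>y. exp (l0 * y)) x = of_real (exp (l0 * x)))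
                 \<and> (\<forall>x\<in>{a..b}. bern_op n t' \<alpha>' p (\<lambda>y. exp (l1 * y)) x = of_real (exp (l1 * x)))
                 \<longrightarrow> (\<forall>k\<le>n. t' k = t k \<and> \<alpha>' k = \<alpha> k))"
proof -
  note n2 = assms(1) and ab = assms(2) and l01 = assms(3) and ec0 = assms(6) and bb = assms(8) and nn = assms(9)
  define rest where "rest = map lam [2..<n+1]"
  have ec: "ext_chebyshev (exp_poly_space rest) (n - 2) a b" unfolding rest_def by (rule ec0)
  have u1: "[0..<n+1] = 0 # [Suc 0..<n+1]" by (rule upt_conv_Cons) simp
  have u2: "[Suc 0..<n+1] = Suc 0 # [Suc (Suc 0)..<n+1]" by (rule upt_conv_Cons) (use n2 in simp)
  have ups: "[0..<n+1] = 0 # 1 # [2..<n+1]" unfolding u1 u2 by (simp only: numeral_2_eq_2 One_nat_def)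
  have mus: "map lam [0..<n+1] = of_real l0 # of_real l1 # rest"
    unfolding ups rest_def using assms(4,5) by simp
  have lenrest: "length rest = n - 1" unfolding rest_def by (simp del: upt_Suc)
  define V where "V = exp_poly_space (of_real l0 # of_real l1 # rest)"
  have bb': "\<forall>k\<le>n. p k \<in> V \<and> zero_order_exactly (p k) a k \<and> zero_order_exactly (p k) b (n - k)"
    using bb unfolding bernstein_basis_def mus V_def by blast
  have pV: "\<forall>k\<le>n. p k \<in> V" using bb' by blast
  have smp: "\<forall>k\<le>n. smooth_fun (p k)" using pV by (simp add: V_def exp_poly_space_def)
  have rep: "\<forall>k\<le>n. \<forall>x\<in>{a..b}. p k x \<in> \<real>" using nn by blast
  have zap: "\<forall>k\<le>n. zero_at_least (p k) a k" using bb' by (simp add: zero_order_exactly_def)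
  have nzp: "\<forall>k\<le>n. (cderiv ^^ k) (p k) a \<noteq> 0" using bb' by (simp add: zero_order_exactly_def)
  have zbp: "\<forall>k\<le>n. zero_at_least (p k) b (n - k)" using bb' by (simp add: zero_order_exactly_def)
  have jap: "\<forall>k\<le>n. Re ((cderiv ^^ k) (p k) a) > 0"
    using nonneg_a[OF ab] smp nn bb' by blast
  have jbp: "\<forall>k\<le>n. (-1) ^ (n - k) * Re ((cderiv ^^ (n - k)) (p k) b) > 0"
    using nonneg_b[OF ab] smp nn bb' by blast
  define E0 where "E0 = (\<lambda>x. 1 * expf (of_real l0) x)"
  define E1 where "E1 = (\<lambda>x. 1 * expf (of_real l1) x)"
  have E0eq: "E0 x = of_real (exp (l0 * x))" for x
    by (simp add: E0_def expf_def exp_of_real[symmetric])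
  have E1eq: "E1 x = of_real (exp (l1 * x))" for x
    by (simp add: E1_def expf_def exp_of_real[symmetric])
  have E0V: "E0 \<in> V" unfolding E0_def V_def by (rule expf_space) simp
  have E1V: "E1 \<in> V" unfolding E1_def V_def by (rule expf_space) simp
  have smE0: "smooth_fun E0" unfolding E0_def by (rule expf_smooth)
  have smE1: "smooth_fun E1" unfolding E1_def by (rule expf_smooth)
  have lenV: "length (of_real l0 # of_real l1 # rest) = Suc n" using lenrest n2 by simp
  obtain w0 where w0: "\<forall>x. E0 x = (\<Sum>k\<le>n. w0 k * p k x)"
    using span_lemma[OF E0V[unfolded V_def] lenV pV[unfolded V_def] zap nzp] by blast
  obtain w1 where w1: "\<forall>x. E1 x = (\<Sum>k\<le>n. w1 k * p k x)"
    using span_lemma[OF E1V[unfolded V_def] lenV pV[unfolded V_def] zap nzp] by blast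
  define c where "c k = Re (w0 k)" for k
  define d where "d k = Re (w1 k)" for k
  have cE: "\<forall>x\<in>{a..b}. (\<Sum>k\<le>n. of_real (c k) * p k x) = E0 x"
  proof
    fix x assume x: "x \<in> {a..b}"
    have "E0 x = (\<Sum>k\<le>n. of_real (Re (w0 k)) * p k x)"
    proof -
      have r: "E0 x \<in> \<real>" by (simp add: E0eq)
      have pr: "\<forall>k\<le>n. p k x \<in> \<real>" using rep x by auto
      show ?thesis by (rule realify[where q="\<lambda>k. p k x", OF w0[rule_format, of x] r pr])
    qed
    then show "(\<Sum>k\<le>n. of_real (c k) * p k x) = E0 x" by (simp add: c_def)
  qed
  have dE: "\<forall>x\<in>{a..b}. (\<Sum>k\<le>n. of_real (d k) * p k x) = E1 x"
  proof
    fix x assume x: "x \<in> {a..b}"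
    have "E1 x = (\<Sum>k\<le>n. of_real (Re (w1 k)) * p k x)"
    proof -
      have r: "E1 x \<in> \<real>" by (simp add: E1eq)
      have pr: "\<forall>k\<le>n. p k x \<in> \<real>" using rep x by auto
      show ?thesis by (rule realify[where q="\<lambda>k. p k x", OF w1[rule_format, of x] r pr])
    qed
    then show "(\<Sum>k\<le>n. of_real (d k) * p k x) = E1 x" by (simp add: d_def)
  qed
  have smD0: "\<forall>j\<le>n. smooth_fun (diff_op (of_real l0) (p j))" using smp diff_op_smooth_jets by blast
  have sumc: "\<forall>x\<in>{a..b}. (\<Sum>j\<le>n. of_real (c j) * diff_op (of_real l0) (p j) x) = 0"
  proof
    fix x assume x: "x \<in> {a..b}"
    have "(\<Sum>j\<le>n. of_real (c j) * diff_op (of_real l0) (p j) x) = diff_op (of_real l0) (\<lambda>x. \<Sum>j\<le>n. of_real (c j) * p j x) x"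
      using diff_op_lc_comm[OF smp] by metis
    also have "\<dots> = diff_op (of_real l0) E0 x"
      by (rule diff_op_agree[OF ab lc_smooth[OF smp] smE0 cE x])
    also have "\<dots> = 0" unfolding E0_def expf_diff_op by simp
    finally show "(\<Sum>j\<le>n. of_real (c j) * diff_op (of_real l0) (p j) x) = 0" .
  qed
  define G where "G = (\<lambda>x. of_real (l1 - l0) * expf (of_real l1) x)"
  have sumd: "\<forall>x\<in>{a..b}. (\<Sum>j\<le>n. of_real (d j) * diff_op (of_real l0) (p j) x) = G x"
  proof
    fix x assume x: "x \<in> {a..b}"
    have "(\<Sum>j\<le>n. of_real (d j) * diff_op (of_real l0) (p j) x) = diff_op (of_real l0) (\<lambda>x. \<Sum>j\<le>n. of_real (d j) * p j x) x"
      using diff_op_lc_comm[OF smp] by metis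
    also have "\<dots> = diff_op (of_real l0) E1 x"
      by (rule diff_op_agree[OF ab lc_smooth[OF smp] smE1 dE x])
    also have "\<dots> = G x" unfolding E1_def expf_diff_op G_def by simp
    finally show "(\<Sum>j\<le>n. of_real (d j) * diff_op (of_real l0) (p j) x) = G x" .
  qed
  have atA: "(\<Sum>k\<le>n. of_real (u k) * p k a) = of_real (u 0) * p 0 a" for u :: "nat \<Rightarrow> real"
    by (rule sum_single) (use zap zal_pos in auto)
  have atB: "(\<Sum>k\<le>n. of_real (u k) * p k b) = of_real (u n) * p n b" for u :: "nat \<Rightarrow> real"
    by (rule sum_single) (use zbp zal_pos in auto)
  have pa: "Re (p 0 a) > 0" using jap by auto
  have pb: "Re (p n b) > 0" using jbp by auto
  have ca: "exp (l0 * a) = c 0 * Re (p 0 a)"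
    using cE[rule_format, of a] ab E0eq[of a] unfolding atA by (metis Re_complex_of_real Re_ofreal_mult atLeastAtMost_iff order_refl less_imp_le)
  have da: "exp (l1 * a) = d 0 * Re (p 0 a)"
    using dE[rule_format, of a] ab E1eq[of a] unfolding atA by (metis Re_complex_of_real Re_ofreal_mult atLeastAtMost_iff order_refl less_imp_le)
  have cb: "exp (l0 * b) = c n * Re (p n b)"
    using cE[rule_format, of b] ab E0eq[of b] unfolding atB by (metis Re_complex_of_real Re_ofreal_mult atLeastAtMost_iff order_refl less_imp_le)
  have db: "exp (l1 * b) = d n * Re (p n b)"
    using dE[rule_format, of b] ab E1eq[of b] unfolding atB by (metis Re_complex_of_real Re_ofreal_mult atLeastAtMost_iff order_refl less_imp_le)
  have c0: "c 0 > 0" using ca pa by (metis exp_gt_zero zero_less_mult_pos2)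
  have Z1: "\<forall>v k. 1 \<le> k \<longrightarrow> k \<le> n \<longrightarrow>
      zero_at_least (\<lambda>x. \<Sum>j\<le>n. of_real (v j) * diff_op (of_real l0) (p j) x) a (k - 1) \<longrightarrow>
      zero_at_least (\<lambda>x. \<Sum>j\<le>n. of_real (v j) * diff_op (of_real l0) (p j) x) b (n - k) \<longrightarrow>
      ((\<exists>z\<in>{a<..<b}. (\<Sum>j\<le>n. of_real (v j) * diff_op (of_real l0) (p j) z) = 0) \<or>
        zero_at_least (\<lambda>x. \<Sum>j\<le>n. of_real (v j) * diff_op (of_real l0) (p j) x) a k) \<longrightarrow>
      (\<forall>x\<in>{a..b}. (\<Sum>j\<le>n. of_real (v j) * diff_op (of_real l0) (p j) x) = 0)"
  proof (intro allI impI)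
    fix v k assume k: "1 \<le> k" "k \<le> n"
      and z1: "zero_at_least (\<lambda>x. \<Sum>j\<le>n. of_real (v j) * diff_op (of_real l0) (p j) x) a (k - 1)"
      and z2: "zero_at_least (\<lambda>x. \<Sum>j\<le>n. of_real (v j) * diff_op (of_real l0) (p j) x) b (n - k)"
      and ex: "(\<exists>z\<in>{a<..<b}. (\<Sum>j\<le>n. of_real (v j) * diff_op (of_real l0) (p j) z) = 0) \<or>
        zero_at_least (\<lambda>x. \<Sum>j\<le>n. of_real (v j) * diff_op (of_real l0) (p j) x) a k"
    have "\<forall>j\<le>n. diff_op (of_real l0) (p j) \<in> exp_poly_space (of_real l1 # rest)"
      using pV space_diff_op unfolding V_def by blast
    then have phiV: "(\<lambda>x. \<Sum>j\<le>n. of_real (v j) * diff_op (of_real l0) (p j) x) \<in> exp_poly_space (of_real l1 # rest)"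
      by (rule space_lc)
    have phire: "\<forall>y\<in>{a..b}. (\<Sum>j\<le>n. of_real (v j) * diff_op (of_real l0) (p j) y) \<in> \<real>"
      using real_diff_op[OF ab] smp rep by (auto intro!: sum_in_Reals)
    have rs: "(k - 1) + (n - k) = (n - 2) + 1" using k n2 by simp
    have ex': "(\<exists>z\<in>{a<..<b}. (\<Sum>j\<le>n. of_real (v j) * diff_op (of_real l0) (p j) z) = 0) \<or>
        zero_at_least (\<lambda>x. \<Sum>j\<le>n. of_real (v j) * diff_op (of_real l0) (p j) x) a (Suc (k - 1))"
      using ex k by simp
    show "\<forall>x\<in>{a..b}. (\<Sum>j\<le>n. of_real (v j) * diff_op (of_real l0) (p j) x) = 0" by (rule rollez[OF ab ec phiV phire rs z1 z2 ex'])
  qed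
  note st1 = POS[OF ab _ smp rep zap jap zbp jbp sumc c0 Z1]
  have cpos: "\<forall>k\<le>n. c k > 0" using st1(1) n2 by simp
  define M where "M k = (\<lambda>x. \<Sum>j\<le>n. of_real (if k \<le> j then c j else 0) * diff_op (of_real l0) (p j) x)" for k
  have Mprop: "smooth_fun (M k) \<and> (\<forall>x\<in>{a..b}. M k x \<in> \<real>) \<and> zero_at_least (M k) a (k - 1) \<and>
      Re ((cderiv ^^ (k - 1)) (M k) a) > 0 \<and> zero_at_least (M k) b (n - k) \<and>
      (-1) ^ (n - k) * Re ((cderiv ^^ (n - k)) (M k) b) > 0" if "1 \<le> k" "k \<le> n" for k
    unfolding M_def using st1(2)[OF _ that] n2 by simp
  define g where "g k = d k / c k" for k
  have dg: "d k = g k * c k" if "k \<le> n" for k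
  proof -
    have "c k > 0" using cpos that by simp
    then show ?thesis by (simp add: g_def)
  qed
  have abel: "\<forall>x\<in>{a..b}. (\<Sum>i\<le>n - 1. of_real (g (Suc i) - g i) * M (Suc i) x) = G x"
  proof
    fix x assume x: "x \<in> {a..b}"
    have nn1: "Suc (n - 1) = n" using n2 by simp
    have "(\<Sum>i\<le>n - 1. of_real (g (Suc i) - g i) * M (Suc i) x)
      = (\<Sum>j\<le>n. of_real (g j * c j) * diff_op (of_real l0) (p j) x) - of_real (g 0) * (\<Sum>j\<le>n. of_real (c j) * diff_op (of_real l0) (p j) x)"
      using abel_sum[where N="n - 1" and g=g and c=c and X="\<lambda>j. diff_op (of_real l0) (p j) x"] unfolding nn1 M_def by simp
    also have "\<dots> = (\<Sum>j\<le>n. of_real (d j) * diff_op (of_real l0) (p j) x)"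
      using sumc x dg by simp
    also have "\<dots> = G x" using sumd x by simp
    finally show "(\<Sum>i\<le>n - 1. of_real (g (Suc i) - g i) * M (Suc i) x) = G x" .
  qed
  define P2 where "P2 i = M (Suc i)" for i
  define u2 where "u2 i = g (Suc i) - g i" for i
  have m2: "1 \<le> n - 1" using n2 by simp
  have MPi: "smooth_fun (P2 i) \<and> (\<forall>x\<in>{a..b}. P2 i x \<in> \<real>) \<and> zero_at_least (P2 i) a i \<and>
      Re ((cderiv ^^ i) (P2 i) a) > 0 \<and> zero_at_least (P2 i) b (n - 1 - i) \<and>
      (-1) ^ (n - 1 - i) * Re ((cderiv ^^ (n - 1 - i)) (P2 i) b) > 0" if "i \<le> n - 1" for i
  proof -
    have "1 \<le> Suc i" "Suc i \<le> n" using that n2 by auto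
    from Mprop[OF this] show ?thesis by (simp add: P2_def)
  qed
  have sm2: "\<forall>i\<le>n - 1. smooth_fun (P2 i)" using MPi by blast
  have re2: "\<forall>i\<le>n - 1. \<forall>x\<in>{a..b}. P2 i x \<in> \<real>" using MPi by blast
  have za2: "\<forall>i\<le>n - 1. zero_at_least (P2 i) a i" using MPi by blast
  have ja2: "\<forall>i\<le>n - 1. Re ((cderiv ^^ i) (P2 i) a) > 0" using MPi by blast
  have zb2: "\<forall>i\<le>n - 1. zero_at_least (P2 i) b (n - 1 - i)" using MPi by blast
  have jb2: "\<forall>i\<le>n - 1. (-1) ^ (n - 1 - i) * Re ((cderiv ^^ (n - 1 - i)) (P2 i) b) > 0" using MPi by blast
  have D0V1: "\<forall>j\<le>n. diff_op (of_real l0) (p j) \<in> exp_poly_space (of_real l1 # rest)"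
    using pV space_diff_op unfolding V_def by blast
  have MV1: "\<forall>i\<le>n - 1. P2 i \<in> exp_poly_space (of_real l1 # rest)"
  proof (intro allI impI)
    fix i :: nat
    show "P2 i \<in> exp_poly_space (of_real l1 # rest)" unfolding P2_def M_def by (rule space_lc[OF D0V1])
  qed
  have D1W: "\<forall>i\<le>n - 1. diff_op (of_real l1) (P2 i) \<in> exp_poly_space rest"
    using MV1 space_diff_op by blast
  have abel2: "\<forall>x\<in>{a..b}. (\<Sum>i\<le>n - 1. of_real (u2 i) * P2 i x) = G x"
    using abel by (simp add: u2_def P2_def)
  have smG: "smooth_fun G" unfolding G_def by (rule expf_smooth)
  have sumD2: "\<forall>x\<in>{a..b}. (\<Sum>i\<le>n - 1. of_real (u2 i) * diff_op (of_real l1) (P2 i) x) = 0"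
  proof
    fix x assume x: "x \<in> {a..b}"
    have "(\<Sum>i\<le>n - 1. of_real (u2 i) * diff_op (of_real l1) (P2 i) x) = diff_op (of_real l1) (\<lambda>x. \<Sum>i\<le>n - 1. of_real (u2 i) * P2 i x) x"
      using diff_op_lc_comm[OF sm2] by metis
    also have "\<dots> = diff_op (of_real l1) G x"
      by (rule diff_op_agree[OF ab lc_smooth[OF sm2] smG abel2 x])
    also have "\<dots> = 0" unfolding G_def expf_diff_op by simp
    finally show "(\<Sum>i\<le>n - 1. of_real (u2 i) * diff_op (of_real l1) (P2 i) x) = 0" .
  qed
  have expfR: "expf (of_real l) x = of_real (exp (l * x))" for l x
    by (simp add: expf_def exp_of_real[symmetric])
  have u20: "u2 0 > 0"
  proof -
    have "(\<Sum>i\<le>n - 1. of_real (u2 i) * P2 i a) = of_real (u2 0) * P2 0 a"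
      by (rule sum_single) (use za2 zal_pos in auto)
    then have "G a = of_real (u2 0) * P2 0 a" using abel2 ab by auto
    then have "(l1 - l0) * exp (l1 * a) = u2 0 * Re (P2 0 a)"
      unfolding G_def expfR by (metis Re_complex_of_real Re_ofreal_mult of_real_mult)
    moreover have "Re (P2 0 a) > 0" using ja2 by auto
    moreover have "(l1 - l0) * exp (l1 * a) > 0" using l01 by simp
    ultimately show ?thesis by (metis zero_less_mult_pos2)
  qed
  have Z2: "\<forall>v k. 1 \<le> k \<longrightarrow> k \<le> n - 1 \<longrightarrow>
      zero_at_least (\<lambda>x. \<Sum>j\<le>n - 1. of_real (v j) * diff_op (of_real l1) (P2 j) x) a (k - 1) \<longrightarrow>
      zero_at_least (\<lambda>x. \<Sum>j\<le>n - 1. of_real (v j) * diff_op (of_real l1) (P2 j) x) b (n - 1 - k) \<longrightarrow>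
      ((\<exists>z\<in>{a<..<b}. (\<Sum>j\<le>n - 1. of_real (v j) * diff_op (of_real l1) (P2 j) z) = 0) \<or>
        zero_at_least (\<lambda>x. \<Sum>j\<le>n - 1. of_real (v j) * diff_op (of_real l1) (P2 j) x) a k) \<longrightarrow>
      (\<forall>x\<in>{a..b}. (\<Sum>j\<le>n - 1. of_real (v j) * diff_op (of_real l1) (P2 j) x) = 0)"
  proof (intro allI impI)
    fix v k assume k: "1 \<le> k" "k \<le> n - 1"
      and z1: "zero_at_least (\<lambda>x. \<Sum>j\<le>n - 1. of_real (v j) * diff_op (of_real l1) (P2 j) x) a (k - 1)"
      and z2: "zero_at_least (\<lambda>x. \<Sum>j\<le>n - 1. of_real (v j) * diff_op (of_real l1) (P2 j) x) b (n - 1 - k)"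
      and ex: "(\<exists>z\<in>{a<..<b}. (\<Sum>j\<le>n - 1. of_real (v j) * diff_op (of_real l1) (P2 j) z) = 0) \<or>
        zero_at_least (\<lambda>x. \<Sum>j\<le>n - 1. of_real (v j) * diff_op (of_real l1) (P2 j) x) a k"
    have phiW: "(\<lambda>x. \<Sum>j\<le>n - 1. of_real (v j) * diff_op (of_real l1) (P2 j) x) \<in> exp_poly_space rest"
      by (rule space_lc[OF D1W])
    have rs: "(k - 1) + (n - 1 - k) = n - 2" using k n2 by simp
    have ex': "(\<exists>z\<in>{a<..<b}. (\<Sum>j\<le>n - 1. of_real (v j) * diff_op (of_real l1) (P2 j) z) = 0) \<or>
        zero_at_least (\<lambda>x. \<Sum>j\<le>n - 1. of_real (v j) * diff_op (of_real l1) (P2 j) x) a (Suc (k - 1))"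
      using ex k by simp
    show "\<forall>x\<in>{a..b}. (\<Sum>j\<le>n - 1. of_real (v j) * diff_op (of_real l1) (P2 j) x) = 0"
      by (rule ecz[OF ec phiW ab rs z1 z2 ex'])
  qed
  note st2 = POS[OF ab m2 sm2 re2 za2 ja2 zb2 jb2 sumD2 u20 Z2]
  have gstep: "g i < g (Suc i)" if "i < n" for i
    using st2(1) that by (auto simp: u2_def)
  have g0: "g 0 = exp ((l1 - l0) * a)"
  proof -
    have "g 0 = d 0 / c 0" by (simp add: g_def)
    also have "\<dots> = exp (l1 * a) / exp (l0 * a)" using ca da pa by simp
    also have "\<dots> = exp ((l1 - l0) * a)" by (simp add: exp_diff[symmetric] algebra_simps)
    finally show ?thesis .
  qed
  have gn: "g n = exp ((l1 - l0) * b)"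
  proof -
    have "g n = d n / c n" by (simp add: g_def)
    also have "\<dots> = exp (l1 * b) / exp (l0 * b)" using cb db pb by simp
    also have "\<dots> = exp ((l1 - l0) * b)" by (simp add: exp_diff[symmetric] algebra_simps)
    finally show ?thesis .
  qed
  have glow: "g 0 \<le> g k" if "k \<le> n" for k
    using that
  proof (induction k)
    case 0 then show ?case by simp
  next
    case (Suc k) then show ?case using gstep[of k] by simp
  qed
  have ghigh: "g k \<le> g (k + e)" if "k + e \<le> n" for k e
    using that
  proof (induction e)
    case 0 then show ?case by simp
  next
    case (Suc e) then show ?case using gstep[of "k + e"] by simp
  qed
  have gpos: "g k > 0" if "k \<le> n" for k using glow[OF that] g0 by (metis exp_gt_zero less_le_trans)
  define t where "t k = ln (g k) / (l1 - l0)" for k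
  define \<alpha> where "\<alpha> k = c k * exp (- (l0 * t k))" for k
  have l10: "l1 - l0 > 0" using l01 by simp
  have et: "exp ((l1 - l0) * t k) = g k" if "k \<le> n" for k
    using gpos[OF that] l10 by (simp add: t_def)
  have tab: "t k \<in> {a..b}" if "k \<le> n" for k
  proof -
    have "ln (g 0) \<le> ln (g k)" using glow[OF that] gpos that by simp
    then have "(l1 - l0) * a \<le> ln (g k)" using g0 by simp
    then have 1: "a \<le> t k" using l10 by (simp add: t_def pos_le_divide_eq mult.commute)
    have "g k \<le> g n" using ghigh[of k "n - k"] that by simp
    then have "ln (g k) \<le> ln (g n)" using gpos that by simp
    then have "ln (g k) \<le> (l1 - l0) * b" using gn by simp
    then have 2: "t k \<le> b" using l10 by (simp add: t_def pos_divide_le_eq mult.commute)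
    from 1 2 show ?thesis by simp
  qed
  have apos: "\<alpha> k > 0" if "k \<le> n" for k using cpos that by (simp add: \<alpha>_def)
  have coef0: "exp (l0 * t k) * \<alpha> k = c k" for k
    by (simp add: \<alpha>_def exp_minus field_simps)
  have coef1: "exp (l1 * t k) * \<alpha> k = d k" if "k \<le> n" for k
  proof -
    have ee: "exp ((l1 - l0) * t k) = exp (l1 * t k) * exp (- (l0 * t k))"
      by (simp add: exp_add[symmetric] algebra_simps)
    have "exp (l1 * t k) * \<alpha> k = c k * exp ((l1 - l0) * t k)"
      unfolding ee \<alpha>_def by (simp add: mult_ac)
    also have "\<dots> = d k" using et[OF that] dg[OF that] by simp
    finally show ?thesis .
  qed
  have B0: "\<forall>x\<in>{a..b}. bern_op n t \<alpha> p (\<lambda>y. exp (l0 * y)) x = of_real (exp (l0 * x))"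
  proof
    fix x assume x: "x \<in> {a..b}"
    have "bern_op n t \<alpha> p (\<lambda>y. exp (l0 * y)) x = (\<Sum>k\<le>n. of_real (c k) * p k x)"
      unfolding bern_op_def using coef0 by simp
    also have "\<dots> = of_real (exp (l0 * x))" using cE x E0eq by simp
    finally show "bern_op n t \<alpha> p (\<lambda>y. exp (l0 * y)) x = of_real (exp (l0 * x))" .
  qed
  have B1: "\<forall>x\<in>{a..b}. bern_op n t \<alpha> p (\<lambda>y. exp (l1 * y)) x = of_real (exp (l1 * x))"
  proof
    fix x assume x: "x \<in> {a..b}"
    have "bern_op n t \<alpha> p (\<lambda>y. exp (l1 * y)) x = (\<Sum>k\<le>n. of_real (d k) * p k x)"
      unfolding bern_op_def by (rule sum.cong) (simp_all add: coef1)
    also have "\<dots> = of_real (exp (l1 * x))" using dE x E1eq by simp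
    finally show "bern_op n t \<alpha> p (\<lambda>y. exp (l1 * y)) x = of_real (exp (l1 * x))" .
  qed
  have U: "\<forall>k\<le>n. t' k = t k \<and> \<alpha>' k = \<alpha> k"
    if h: "(\<forall>k\<le>n. t' k \<in> {a..b} \<and> \<alpha>' k > 0)
       \<and> (\<forall>x\<in>{a..b}. bern_op n t' \<alpha>' p (\<lambda>y. exp (l0 * y)) x = of_real (exp (l0 * x)))
       \<and> (\<forall>x\<in>{a..b}. bern_op n t' \<alpha>' p (\<lambda>y. exp (l1 * y)) x = of_real (exp (l1 * x)))" for t' \<alpha>'
  proof -
    have u0: "\<forall>k\<le>n. exp (l0 * t' k) * \<alpha>' k = c k"
    proof (rule coef_unique[OF ab smp zap nzp])
      show "\<forall>x\<in>{a..b}. (\<Sum>k\<le>n. of_real (exp (l0 * t' k) * \<alpha>' k) * p k x) = E0 x"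
        using h E0eq unfolding bern_op_def by simp
      show "\<forall>x\<in>{a..b}. (\<Sum>k\<le>n. of_real (c k) * p k x) = E0 x" by (rule cE)
    qed
    have u1: "\<forall>k\<le>n. exp (l1 * t' k) * \<alpha>' k = d k"
    proof (rule coef_unique[OF ab smp zap nzp])
      show "\<forall>x\<in>{a..b}. (\<Sum>k\<le>n. of_real (exp (l1 * t' k) * \<alpha>' k) * p k x) = E1 x"
        using h E1eq unfolding bern_op_def by simp
      show "\<forall>x\<in>{a..b}. (\<Sum>k\<le>n. of_real (d k) * p k x) = E1 x" by (rule dE)
    qed
    show ?thesis
    proof (intro allI impI conjI)
      fix k assume k: "k \<le> n"
      have ap: "\<alpha>' k > 0" using h k by blast
      have "exp ((l1 - l0) * t' k) = d k / c k"
      proof -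
        have "d k / c k = (exp (l1 * t' k) * \<alpha>' k) / (exp (l0 * t' k) * \<alpha>' k)" using u0 u1 k by simp
        also have "\<dots> = exp (l1 * t' k) / exp (l0 * t' k)" using ap by simp
        also have "\<dots> = exp ((l1 - l0) * t' k)" by (simp add: exp_diff[symmetric] algebra_simps)
        finally show ?thesis by simp
      qed
      also have "\<dots> = exp ((l1 - l0) * t k)" using et[OF k] by (simp add: g_def)
      finally have "(l1 - l0) * t' k = (l1 - l0) * t k" by simp
      then show tt: "t' k = t k" using l10 by simp
      have "\<alpha>' k = c k / exp (l0 * t' k)" using u0 k by (simp add: field_simps)
      also have "\<dots> = \<alpha> k" using tt by (simp add: \<alpha>_def exp_minus field_simps)
      finally show "\<alpha>' k = \<alpha> k" .
    qed
  qed
  show ?thesis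
    apply (rule exI[of _ t], rule exI[of _ \<alpha>])
    using tab apos B0 B1 U by blast
qed

end
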